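(* Suppose $n$ is an odd integer with $1\leq n<\min\{t_1,t_2,t_3\}$. Then the $\mathfrak{BI}$-module $\mathscr M_n$ is isomorphic to $W\oplus W$, where $W=E_n\big(k_2+k_3+\tfrac{n+1}{2},\,-k_1-k_3-\tfrac{n+1}{2},\,k_1+k_2+\tfrac{n+1}{2}\big)$. Moreover, if $k_1,k_2,k_3\geq 0$, then $W$ is irreducible and is isomorphic to $E_n\big(k_2+k_3+\tfrac{n+1}{2},\,k_1+k_3+\tfrac{n+1}{2},\,k_1+k_2+\tfrac{n+1}{2}\big)$.
   Context: Fix real numbers $k_1,k_2,k_3$. For $i=1,2,3$ let $R_i$ be the operator on functions on $\mathbb R^3$ replacing $x_i$ by $-x_i$, and let $T_i$ be the Dunkl operator $T_if=\frac{\partial f}{\partial x_i}+k_i\frac{f-R_if}{x_i}$. Let $\sigma_1=\begin{pmatrix}0&1\\1&0\end{pmatrix}$, $\sigma_2=\begin{pmatrix}0&-\sqrt{-1}\\ \sqrt{-1}&0\end{pmatrix}$, $\sigma_3=\begin{pmatrix}1&0\\0&-1\end{pmatrix}$, and let $e_i$ act on $\mathbb C^2$ by $\sigma_i$. Tensor products are over $\mathbb R$; $\mathbb R[x_1,x_2,x_3]_n$ denotes homogeneous polynomials of degree $n$. Let $\mathbf D=e_1\otimes T_1+e_2\otimes T_2+e_3\otimes T_3$ and $\mathscr M_n=\ker(\mathbf D|_{\mathbb C^2\otimes\mathbb R[x_1,x_2,x_3]_n})$. For $i=1,2,3$ set $t_i=-2k_i$ if $2k_i$ is an odd negative integer, and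 $t_i=\infty$ otherwise. The universal Bannai–Ito algebra $\mathfrak{BI}$ is the unital associative $\mathbb C$-algebra generated by $X,Y,Z$ with relations saying that $\kappa=\{X,Y\}-Z$, $\lambda=\{Y,Z\}-X$, $\mu=\{Z,X\}-Y$ commute with $X,Y,Z$ (here $\{A,B\}=AB+BA$). $\mathscr M_n$ is a $\mathfrak{BI}$-module via $X=(\sqrt{-1}\,e_1\otimes(x_3T_2-x_2T_3)+\tfrac12)R_2R_3+k_2R_3+k_3R_2$, $Y=(\sqrt{-1}\,e_2\otimes(x_1T_3-x_3T_1)+\tfrac12)R_1R_3+k_3R_1+k_1R_3$, $Z=(\sqrt{-1}\,e_3\otimes(x_2T_1-x_1T_2)+\tfrac12)R_1R_2+k_1R_2+k_2R_1$, with operators composed right to left and $R_i$ acting on the polynomial factor. For $a,b,c\in\mathbb C$ and odd $d\geq1$, $E_d(a,b,c)$ is the $\mathfrak{BI}$-module $\mathbb C^{d+1}$ in which, w.r.t. a basis $v_0,\dots,v_d$, $X$ acts by the lower bidiagonal matrix with diagonal $(\theta_0,\dots,\theta_d)$ and all subdiagonal entries $1$, $Y$ acts by the upper bidiagonal matrix with diagonal $(\theta^*_0,\dots,\theta^*_d)$ and superdiagonal $(\varphi_1,\dots,\varphi_d)$, and $Z=\{X,Y\}-\big(c^2-a^2-b^2+\frac{(d+1)^2}{4}\big)$, where $\theta_i=\frac{(-1)^i(2a-d+2i)}{2}$, $\theta^*_i=\frac{(-1)^i(2b-d+2i)}{2}$, $\varphi_i=i(d-i+1)$ for $i$ even and $\varphi_i=c^2-\frac{(2a+2b-d+2i-1)^2}{4}$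 for $i$ odd. *)

theory Defs
  imports Complex_Main "HOL-Library.Extended_Real"
begin

text \<open>A monomial x1^a x2^b x3^c is encoded by its exponent triple (a,b,c).
  A polynomial with complex coefficients is its (finitely supported) coefficient
  function.  An element of C^2 (tensor over R) R[x1,x2,x3] is a C^2-valued polynomial,
  encoded as a function on bool \<times> monomials: component False is the first
  coordinate of C^2, component True the second.\<close>

type_synonym mono = "nat \<times> nat \<times> nat"
type_synonym cpoly = "mono \<Rightarrow> complex"
type_synonym spoly = "bool \<times> mono \<Rightarrow> complex"

fun expo :: "nat \<Rightarrow> mono \<Rightarrow> nat" where
  "expo i (a, b, c) = (if i = 1 then a else if i = 2 then b else c)"

fun bump :: "nat \<Rightarrow> mono \<Rightarrow> mono" where
  "bump i (a, b, c) = (if i = 1 then (a + 1, b, c) else if i = 2 then (a, b + 1, c) else (a, b, c + 1))"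

fun lower :: "nat \<Rightarrow> mono \<Rightarrow> mono" where
  "lower i (a, b, c) = (if i = 1 then (a - 1, b, c) else if i = 2 then (a, b - 1, c) else (a, b, c - 1))"

fun mdeg :: "mono \<Rightarrow> nat" where
  "mdeg (a, b, c) = a + b + c"

definition pR :: "nat \<Rightarrow> cpoly \<Rightarrow> cpoly" where
  "pR i p = (\<lambda>\<alpha>. (-1) ^ expo i \<alpha> * p \<alpha>)"

definition pX :: "nat \<Rightarrow> cpoly \<Rightarrow> cpoly" where
  "pX i p = (\<lambda>\<alpha>. if expo i \<alpha> = 0 then 0 else p (lower i \<alpha>))"

definition pD :: "nat \<Rightarrow> cpoly \<Rightarrow> cpoly" where
  "pD i p = (\<lambda>\<alpha>. of_nat (expo i \<alpha> + 1) * p (bump i \<alpha>))"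

text \<open>Division by x_i (exact on polynomials divisible by x_i, such as f - R_i f).\<close>
definition pdivX :: "nat \<Rightarrow> cpoly \<Rightarrow> cpoly" where
  "pdivX i q = (\<lambda>\<alpha>. q (bump i \<alpha>))"

definition kap :: "real \<Rightarrow> real \<Rightarrow> real \<Rightarrow> nat \<Rightarrow> real" where
  "kap k1 k2 k3 i = (if i = 1 then k1 else if i = 2 then k2 else k3)"

definition dunkl :: "(nat \<Rightarrow> real) \<Rightarrow> nat \<Rightarrow> cpoly \<Rightarrow> cpoly" where
  "dunkl k i p = (\<lambda>\<alpha>. pD i p \<alpha> + complex_of_real (k i) * pdivX i (\<lambda>\<beta>. p \<beta> - pR i p \<beta>) \<alpha>)"

definition sp :: "(cpoly \<Rightarrow> cpoly) \<Rightarrow> spoly \<Rightarrow> spoly" where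
  "sp Op F = (\<lambda>(j, \<alpha>). Op (\<lambda>\<beta>. F (j, \<beta>)) \<alpha>)"

text \<open>e_i acting on C^2 by the Pauli matrix sigma_i.\<close>
definition pauli :: "nat \<Rightarrow> spoly \<Rightarrow> spoly" where
  "pauli i F = (\<lambda>(j, \<alpha>).
     if i = 1 then F (\<not> j, \<alpha>)
     else if i = 2 then (if j then \<i> * F (False, \<alpha>) else - \<i> * F (True, \<alpha>))
     else (if j then - F (True, \<alpha>) else F (False, \<alpha>)))"

definition Dirac :: "(nat \<Rightarrow> real) \<Rightarrow> spoly \<Rightarrow> spoly" where
  "Dirac k F = (\<lambda>x. (\<Sum>i\<in>{1,2,3::nat}. pauli i (sp (dunkl k i) F) x))"

definition Mspace :: "real \<Rightarrow> real \<Rightarrow> real \<Rightarrow> nat \<Rightarrow> spoly set" where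
  "Mspace k1 k2 k3 n = {F. (\<forall>j \<alpha>. mdeg \<alpha> \<noteq> n \<longrightarrow> F (j, \<alpha>) = 0) \<and> Dirac (kap k1 k2 k3) F = (\<lambda>_. 0)}"

datatype BIgen = GX | GY | GZ

definition angm :: "(nat \<Rightarrow> real) \<Rightarrow> nat \<Rightarrow> nat \<Rightarrow> cpoly \<Rightarrow> cpoly" where
  "angm k l j p = (\<lambda>\<alpha>. pX l (dunkl k j p) \<alpha> - pX j (dunkl k l p) \<alpha>)"

definition genop :: "(nat \<Rightarrow> real) \<Rightarrow> nat \<Rightarrow> nat \<Rightarrow> nat \<Rightarrow> spoly \<Rightarrow> spoly" where
  "genop k i j l F =
    (let G = sp (pR j) (sp (pR l) F) in
     (\<lambda>x. \<i> * pauli i (sp (angm k l j) G) x + G x / 2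
          + complex_of_real (k j) * sp (pR l) F x + complex_of_real (k l) * sp (pR j) F x))"

definition Mact :: "real \<Rightarrow> real \<Rightarrow> real \<Rightarrow> BIgen \<Rightarrow> spoly \<Rightarrow> spoly" where
  "Mact k1 k2 k3 g = (case g of
      GX \<Rightarrow> genop (kap k1 k2 k3) 1 2 3
    | GY \<Rightarrow> genop (kap k1 k2 k3) 2 3 1
    | GZ \<Rightarrow> genop (kap k1 k2 k3) 3 1 2)"

definition Eth :: "nat \<Rightarrow> complex \<Rightarrow> nat \<Rightarrow> complex" where
  "Eth d a i = (-1) ^ i * (2 * a - of_nat d + 2 * of_nat i) / 2"

definition Eph :: "nat \<Rightarrow> complex \<Rightarrow> complex \<Rightarrow> complex \<Rightarrow> nat \<Rightarrow> complex" where
  "Eph d a b c i = (if even i then of_nat (i * (d - i + 1))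
                    else c ^ 2 - (2 * a + 2 * b - of_nat d + 2 * of_nat i - 1) ^ 2 / 4)"

text \<open>Matrix entries (row r, column s) w.r.t. the basis v_0..v_d.\<close>
definition EXm :: "nat \<Rightarrow> complex \<Rightarrow> nat \<Rightarrow> nat \<Rightarrow> complex" where
  "EXm d a r s = (if r = s then Eth d a r else if r = s + 1 then 1 else 0)"

definition EYm :: "nat \<Rightarrow> complex \<Rightarrow> complex \<Rightarrow> complex \<Rightarrow> nat \<Rightarrow> nat \<Rightarrow> complex" where
  "EYm d a b c r s = (if r = s then Eth d b r else if s = r + 1 then Eph d a b c s else 0)"

definition matact :: "nat \<Rightarrow> (nat \<Rightarrow> nat \<Rightarrow> complex) \<Rightarrow> (nat \<Rightarrow> complex) \<Rightarrow> (nat \<Rightarrow> complex)" where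
  "matact d M v = (\<lambda>r. if r \<le> d then (\<Sum>s\<le>d. M r s * v s) else 0)"

text \<open>C^{d+1} as coordinate vectors indexed by 0..d.\<close>
definition Ecar :: "nat \<Rightarrow> (nat \<Rightarrow> complex) set" where
  "Ecar d = {v. \<forall>r>d. v r = 0}"

definition Eact :: "nat \<Rightarrow> complex \<Rightarrow> complex \<Rightarrow> complex \<Rightarrow> BIgen \<Rightarrow> (nat \<Rightarrow> complex) \<Rightarrow> (nat \<Rightarrow> complex)" where
  "Eact d a b c g = (case g of
      GX \<Rightarrow> matact d (EXm d a)
    | GY \<Rightarrow> matact d (EYm d a b c)
    | GZ \<Rightarrow> (\<lambda>v r. matact d (EXm d a) (matact d (EYm d a b c) v) r
                  + matact d (EYm d a b c) (matact d (EXm d a) v) r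
                  - (c ^ 2 - a ^ 2 - b ^ 2 + (of_nat d + 1) ^ 2 / 4) * v r))"

definition dsum_car :: "('a \<Rightarrow> complex) set \<Rightarrow> ('b \<Rightarrow> complex) set \<Rightarrow> ('a + 'b \<Rightarrow> complex) set" where
  "dsum_car V U = {f. (\<lambda>a. f (Inl a)) \<in> V \<and> (\<lambda>b. f (Inr b)) \<in> U}"

definition dsum_act :: "(BIgen \<Rightarrow> ('a \<Rightarrow> complex) \<Rightarrow> ('a \<Rightarrow> complex)) \<Rightarrow> (BIgen \<Rightarrow> ('b \<Rightarrow> complex) \<Rightarrow> ('b \<Rightarrow> complex))
    \<Rightarrow> BIgen \<Rightarrow> ('a + 'b \<Rightarrow> complex) \<Rightarrow> ('a + 'b \<Rightarrow> complex)" where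
  "dsum_act A B g f = (\<lambda>x. case x of
      Inl a \<Rightarrow> A g (\<lambda>a'. f (Inl a')) a
    | Inr b \<Rightarrow> B g (\<lambda>b'. f (Inr b')) b)"

definition bi_iso :: "('a \<Rightarrow> complex) set \<Rightarrow> (BIgen \<Rightarrow> ('a \<Rightarrow> complex) \<Rightarrow> ('a \<Rightarrow> complex))
    \<Rightarrow> ('b \<Rightarrow> complex) set \<Rightarrow> (BIgen \<Rightarrow> ('b \<Rightarrow> complex) \<Rightarrow> ('b \<Rightarrow> complex)) \<Rightarrow> bool" where
  "bi_iso V A U B \<longleftrightarrow> (\<exists>\<Phi>. bij_betw \<Phi> V U
     \<and> (\<forall>u\<in>V. \<forall>v\<in>V. \<Phi> (\<lambda>x. u x + v x) = (\<lambda>y. \<Phi> u y + \<Phi> v y))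
     \<and> (\<forall>c. \<forall>u\<in>V. \<Phi> (\<lambda>x. c * u x) = (\<lambda>y. c * \<Phi> u y))
     \<and> (\<forall>g. \<forall>u\<in>V. \<Phi> (A g u) = B g (\<Phi> u)))"

definition bi_irreducible :: "('a \<Rightarrow> complex) set \<Rightarrow> (BIgen \<Rightarrow> ('a \<Rightarrow> complex) \<Rightarrow> ('a \<Rightarrow> complex)) \<Rightarrow> bool" where
  "bi_irreducible V A \<longleftrightarrow> V \<noteq> {\<lambda>_. 0} \<and>
     (\<forall>S. S \<subseteq> V \<and> (\<lambda>_. 0) \<in> S
          \<and> (\<forall>u\<in>S. \<forall>v\<in>S. (\<lambda>x. u x + v x) \<in> S)
          \<and> (\<forall>c. \<forall>u\<in>S. (\<lambda>x. c * u x) \<in> S)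
          \<and> (\<forall>g. \<forall>u\<in>S. A g u \<in> S)
        \<longrightarrow> S = {\<lambda>_. 0} \<or> S = V)"

definition tval :: "real \<Rightarrow> ereal" where
  "tval k = (if \<exists>m::int. odd m \<and> m < 0 \<and> 2 * k = real_of_int m then ereal (- 2 * k) else \<infinity>)"

end

theory Submission
  imports Defs
begin

definition cf :: "real \<Rightarrow> nat \<Rightarrow> complex" where
  "cf \<kappa> m = of_nat m + complex_of_real \<kappa> * (1 - (-1) ^ m)"

lemma expo_bump[simp]: "expo i (bump i \<alpha>) = Suc (expo i \<alpha>)"
  by (cases \<alpha>) auto

lemma dunkl_pt: "dunkl k i p \<alpha> = cf (k i) (Suc (expo i \<alpha>)) * p (bump i \<alpha>)"
  unfolding dunkl_def pD_def pdivX_def pR_def cf_def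
  by (simp add: algebra_simps)

lemma Dirac_F:
  "Dirac k F (False, (a, b, c)) = cf (k 1) (Suc a) * F (True, (Suc a, b, c))
     - \<i> * cf (k 2) (Suc b) * F (True, (a, Suc b, c)) + cf (k 3) (Suc c) * F (False, (a, b, Suc c))"
  unfolding Dirac_def pauli_def sp_def
  by (simp add: dunkl_pt)

lemma Dirac_T:
  "Dirac k F (True, (a, b, c)) = cf (k 1) (Suc a) * F (False, (Suc a, b, c))
     + \<i> * cf (k 2) (Suc b) * F (False, (a, Suc b, c)) - cf (k 3) (Suc c) * F (True, (a, b, Suc c))"
  unfolding Dirac_def pauli_def sp_def
  by (simp add: dunkl_pt)

definition lamX :: "(nat \<Rightarrow> real) \<Rightarrow> nat \<Rightarrow> complex" where
  "lamX k b = (-1) ^ b * (cf (k 2) b + 1/2 + complex_of_real (k 3)) + complex_of_real (k 2)"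
definition lamY :: "(nat \<Rightarrow> real) \<Rightarrow> nat \<Rightarrow> complex" where
  "lamY k a = (-1) ^ a * (cf (k 1) a + 1/2 + complex_of_real (k 3)) + complex_of_real (k 1)"

lemma cf0[simp]: "cf \<kappa> 0 = 0" by (simp add: cf_def)

lemma lin_aux: "(x::complex) = 0 \<Longrightarrow> L - R = c * x \<Longrightarrow> L = R" by simp

lemmas gen_unf = genop_def Let_def pauli_def sp_def angm_def pX_def pR_def lamX_def lamY_def

lemma X_F_Suc:
  assumes D: "Dirac k F = (\<lambda>_. 0)"
  shows "genop k 1 2 3 F (False, (a, Suc b, 0)) = lamX k (Suc b) * F (False, (a, Suc b, 0))
          + \<i> * (-1) ^ b * cf (k 1) (Suc a) * F (False, (Suc a, b, 0))"
proof -
  have e: "Dirac k F (True, (a, b, 0)) = 0" using D by simp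
  show ?thesis
    apply (rule lin_aux[OF e[unfolded Dirac_T], where c = "- \<i> * (-1)^b"])
    unfolding gen_unf by (simp add: dunkl_pt algebra_simps)
qed

lemma X_T_Suc:
  assumes D: "Dirac k F = (\<lambda>_. 0)"
  shows "genop k 1 2 3 F (True, (a, Suc b, 0)) = lamX k (Suc b) * F (True, (a, Suc b, 0))
          - \<i> * (-1) ^ b * cf (k 1) (Suc a) * F (True, (Suc a, b, 0))"
proof -
  have e: "Dirac k F (False, (a, b, 0)) = 0" using D by simp
  show ?thesis
    apply (rule lin_aux[OF e[unfolded Dirac_F], where c = "\<i> * (-1)^b"])
    unfolding gen_unf by (simp add: dunkl_pt algebra_simps)
qed

lemma X_0:
  shows "genop k 1 2 3 F (j, (a, 0, 0)) = lamX k 0 * F (j, (a, 0, 0))"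
  unfolding gen_unf by (cases j) (simp_all add: dunkl_pt algebra_simps)

lemma Y_F_Suc:
  assumes D: "Dirac k F = (\<lambda>_. 0)"
  shows "genop k 2 3 1 F (False, (Suc a, b, 0)) = lamY k (Suc a) * F (False, (Suc a, b, 0))
          - \<i> * (-1) ^ a * cf (k 2) (Suc b) * F (False, (a, Suc b, 0))"
proof -
  have e: "Dirac k F (True, (a, b, 0)) = 0" using D by simp
  show ?thesis
    apply (rule lin_aux[OF e[unfolded Dirac_T], where c = "(-1::complex)^a"])
    unfolding gen_unf by (simp add: dunkl_pt algebra_simps)
qed

lemma Y_T_Suc:
  assumes D: "Dirac k F = (\<lambda>_. 0)"
  shows "genop k 2 3 1 F (True, (Suc a, b, 0)) = lamY k (Suc a) * F (True, (Suc a, b, 0))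
          + \<i> * (-1) ^ a * cf (k 2) (Suc b) * F (True, (a, Suc b, 0))"
proof -
  have e: "Dirac k F (False, (a, b, 0)) = 0" using D by simp
  show ?thesis
    apply (rule lin_aux[OF e[unfolded Dirac_F], where c = "(-1)^a"])
    unfolding gen_unf by (simp add: dunkl_pt algebra_simps)
qed

lemma Y_0:
  shows "genop k 2 3 1 F (j, (0, b, 0)) = lamY k 0 * F (j, (0, b, 0))"
  unfolding gen_unf by (cases j) (simp_all add: dunkl_pt algebra_simps)

definition zdiag :: "(nat \<Rightarrow> real) \<Rightarrow> nat \<Rightarrow> nat \<Rightarrow> complex" where
  "zdiag k a b = (-1)^(a+b) / 2 + complex_of_real (k 1) * (-1)^b + complex_of_real (k 2) * (-1)^a"

lemma Z_F:
  shows "genop k 3 1 2 F (False, (a, b, 0)) = zdiag k a b * F (False, (a, b, 0))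
     + (if a = 0 then 0 else \<i> * (-1)^(a - 1 + b) * cf (k 2) (Suc b) * F (False, (a - 1, Suc b, 0)))
     - (if b = 0 then 0 else \<i> * (-1)^(a + b - 1) * cf (k 1) (Suc a) * F (False, (Suc a, b - 1, 0)))"
  unfolding gen_unf zdiag_def
  by (cases a; cases b) (simp_all add: dunkl_pt algebra_simps power_add)

lemma Z_T:
  shows "genop k 3 1 2 F (True, (a, b, 0)) = zdiag k a b * F (True, (a, b, 0))
     - (if a = 0 then 0 else \<i> * (-1)^(a - 1 + b) * cf (k 2) (Suc b) * F (True, (a - 1, Suc b, 0)))
     + (if b = 0 then 0 else \<i> * (-1)^(a + b - 1) * cf (k 1) (Suc a) * F (True, (Suc a, b - 1, 0)))"
  unfolding gen_unf zdiag_def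
  by (cases a; cases b) (simp_all add: dunkl_pt algebra_simps power_add)

lemma matact_X:
  assumes "r \<le> d"
  shows "matact d (EXm d a) v r = Eth d a r * v r + (if r = 0 then 0 else v (r - 1))"
proof -
  have "(\<Sum>s\<le>d. EXm d a r s * v s) = (\<Sum>s\<le>d. (if s = r then Eth d a r * v s else 0) + (if s = r - 1 \<and> r \<noteq> 0 then v s else 0))"
    by (rule sum.cong) (auto simp: EXm_def)
  also have "\<dots> = Eth d a r * v r + (if r = 0 then 0 else v (r - 1))"
    using assms by (auto simp add: sum.distrib sum.delta)
  finally show ?thesis using assms by (simp add: matact_def)
qed

lemma matact_Y:
  assumes "r \<le> d"
  shows "matact d (EYm d a b c) v r = Eth d b r * v r + (if r < d then Eph d a b c (Suc r) * v (Suc r) else 0)"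
proof -
  have "(\<Sum>s\<le>d. EYm d a b c r s * v s) = (\<Sum>s\<le>d. (if s = r then Eth d b r * v s else 0) + (if s = Suc r then Eph d a b c (Suc r) * v s else 0))"
    by (rule sum.cong) (auto simp: EYm_def)
  also have "\<dots> = Eth d b r * v r + (if r < d then Eph d a b c (Suc r) * v (Suc r) else 0)"
    using assms by (simp add: sum.distrib sum.delta)
  finally show ?thesis using assms by (simp add: matact_def)
qed

lemma matact_out: "\<not> r \<le> d \<Longrightarrow> matact d M v r = 0"
  by (simp add: matact_def)

definition pa :: "real \<Rightarrow> real \<Rightarrow> real \<Rightarrow> nat \<Rightarrow> complex" where
  "pa k1 k2 k3 n = complex_of_real (k2 + k3 + (real n + 1) / 2)"
definition pb :: "real \<Rightarrow> real \<Rightarrow> real \<Rightarrow> nat \<Rightarrow> complex" where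
  "pb k1 k2 k3 n = complex_of_real (- k1 - k3 - (real n + 1) / 2)"
definition pc :: "real \<Rightarrow> real \<Rightarrow> real \<Rightarrow> nat \<Rightarrow> complex" where
  "pc k1 k2 k3 n = complex_of_real (k1 + k2 + (real n + 1) / 2)"

lemma m1_even: "even r \<Longrightarrow> (-1::complex)^r = 1" by simp
lemma m1_odd: "odd r \<Longrightarrow> (-1::complex)^r = -1" by simp

lemma Eth_pa: "Eth n (pa k1 k2 k3 n) r = (-1)^r * (complex_of_real (k2 + k3) + 1/2 + of_nat r)"
  unfolding Eth_def pa_def by (simp add: field_simps)

lemma Eth_pb: "r \<le> n \<Longrightarrow> Eth n (pb k1 k2 k3 n) r = (-1)^r * (of_nat r - complex_of_real (k1 + k3) - 1/2 - of_nat n)"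
  unfolding Eth_def pb_def by (simp add: field_simps)

lemma lamX_Eth: "lamX (kap k1 k2 k3) r = Eth n (pa k1 k2 k3 n) r"
  unfolding Eth_pa lamX_def cf_def kap_def
  by (cases "even r") (simp_all add: algebra_simps)

lemma lamY_Eth: assumes "odd n" "r \<le> n" shows "lamY (kap k1 k2 k3) (n - r) = Eth n (pb k1 k2 k3 n) r"
proof -
  have "(-1::complex)^(n-r) = - ((-1)^r)"
    using assms by (cases "even r") (auto simp: m1_even m1_odd)
  moreover have "even (n - r) \<longleftrightarrow> odd r" using assms by auto
  ultimately show ?thesis
    unfolding Eth_pb[OF assms(2)] lamY_def cf_def kap_def using assms
    by (cases "even r") (simp_all add: algebra_simps of_nat_diff)
qed


lemma Eph_cf:
  assumes "odd n" "r < n"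
  shows "cf k1 (n - r) * cf k2 (Suc r) = Eph n (pa k1 k2 k3 n) (pb k1 k2 k3 n) (pc k1 k2 k3 n) (Suc r)"
proof (cases "even r")
  case True
  then have o: "odd (n - r)" "odd (Suc r)" using assms by auto
  show ?thesis unfolding Eph_def cf_def pa_def pb_def pc_def
    using o assms by (simp add: of_nat_diff power2_eq_square field_simps)
next
  case False
  then have o: "even (n - r)" "even (Suc r)" using assms by auto
  have e0: "n - Suc r + 1 = n - r" using assms by simp
  have e: "Suc r * (n - Suc r + 1) = Suc r * (n - r)" by (simp only: e0)
  show ?thesis unfolding Eph_def cf_def using o assms
    by (simp only: e if_True of_nat_mult) (simp add: of_nat_diff)
qed

definition Kc :: "real \<Rightarrow> real \<Rightarrow> real \<Rightarrow> nat \<Rightarrow> complex" where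
  "Kc k1 k2 k3 n = (pc k1 k2 k3 n)^2 - (pa k1 k2 k3 n)^2 - (pb k1 k2 k3 n)^2 + (of_nat n + 1)^2 / 4"

lemma zdiag_id:
  assumes "odd n" "r \<le> n"
  shows "zdiag (kap k1 k2 k3) (n - r) r = 2 * Eth n (pa k1 k2 k3 n) r * Eth n (pb k1 k2 k3 n) r
     + cf k1 (Suc (n - r)) * cf k2 r + cf k1 (n - r) * cf k2 (Suc r) - Kc k1 k2 k3 n"
proof (cases "even r")
  case True
  then have o: "odd (n - r)" "odd (Suc r)" "even (Suc (n - r))" "odd (n - r + r)" using assms by auto
  show ?thesis unfolding Eth_pa Eth_pb[OF assms(2)]
    unfolding zdiag_def Kc_def cf_def pa_def pb_def pc_def kap_def
    using o assms True by (simp add: of_nat_diff power2_eq_square field_simps)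
next
  case False
  then have o: "even (n - r)" "even (Suc r)" "odd (Suc (n - r))" "odd (n - r + r)" using assms by auto
  show ?thesis unfolding Eth_pa Eth_pb[OF assms(2)]
    unfolding zdiag_def Kc_def cf_def pa_def pb_def pc_def kap_def
    using o assms False by (simp add: of_nat_diff power2_eq_square field_simps)
qed

lemma cf_nz:
  assumes "0 < m" "ereal (real m) < tval \<kappa>"
  shows "cf \<kappa> m \<noteq> 0"
proof
  assume h: "cf \<kappa> m = 0"
  show False
  proof (cases "even m")
    case True
    then show False using h assms by (simp add: cf_def)
  next
    case False
    then have "complex_of_real (real m + 2 * \<kappa>) = 0" using h by (simp add: cf_def mult.commute)
    then have e: "2 * \<kappa> = - real m" by (smt (verit) of_real_eq_0_iff)
    have "\<exists>mm::int. odd mm \<and> mm < 0 \<and> 2 * \<kappa> = real_of_int mm"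
      using False assms e by (intro exI[of _ "- int m"]) auto
    then have "tval \<kappa> = ereal (- 2 * \<kappa>)" by (simp add: tval_def)
    then show False using assms e by simp
  qed
qed

lemma matact_Y_lt: "m < d \<Longrightarrow> matact d (EYm d a b c) w m = Eth d b m * w m + Eph d a b c (Suc m) * w (Suc m)"
  using matact_Y[of m d] by simp
lemma matact_X_Suc: "Suc m \<le> d \<Longrightarrow> matact d (EXm d a) w (Suc m) = Eth d a (Suc m) * w (Suc m) + w m"
  using matact_X[of "Suc m" d] by simp

lemma Eact_Z_pt:
  assumes "r \<le> d"
  shows "Eact d a b c GZ v r =
    (if r = 0 then 0 else (Eth d b (r - 1) + Eth d b r) * v (r - 1))
    + (2 * Eth d a r * Eth d b r + (if r = 0 then 0 else Eph d a b c r) + (if r < d then Eph d a b c (Suc r) else 0)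
        - (c ^ 2 - a ^ 2 - b ^ 2 + (of_nat d + 1) ^ 2 / 4)) * v r
    + (if r < d then Eph d a b c (Suc r) * (Eth d a r + Eth d a (Suc r)) * v (Suc r) else 0)"
proof -
  have X1: "matact d (EXm d a) w r = Eth d a r * w r + (if r = 0 then 0 else w (r - 1))" for w
    using matact_X[OF assms] .
  have Y1: "matact d (EYm d a b c) w r = Eth d b r * w r + (if r < d then Eph d a b c (Suc r) * w (Suc r) else 0)" for w
    using matact_Y[OF assms] .
  show ?thesis
  proof (cases r)
    case 0
    then show ?thesis unfolding Eact_def BIgen.case X1 Y1 by (cases "0 < d") (simp_all add: matact_X_Suc algebra_simps)
  next
    case (Suc m)
    then show ?thesis unfolding Eact_def BIgen.case X1 Y1 using assms by (cases "r < d") (simp_all add: matact_X_Suc matact_Y_lt algebra_simps)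
  qed
qed


primrec gam :: "real \<Rightarrow> nat \<Rightarrow> nat \<Rightarrow> complex" where
  "gam k1 n 0 = 1"
| "gam k1 n (Suc r) = gam k1 n r / (\<i> * (-1)^r * cf k1 (n - r))"

definition vec :: "nat \<Rightarrow> (nat \<Rightarrow> complex) \<Rightarrow> (nat \<Rightarrow> complex) \<Rightarrow> nat \<Rightarrow> complex" where
  "vec n g P = (\<lambda>r. if r \<le> n then g r * P r else 0)"

lemma gam_rec: "cf k1 (n - r) \<noteq> 0 \<Longrightarrow> gam k1 n (Suc r) * (\<i> * (-1)^r * cf k1 (n - r)) = gam k1 n r"
  by simp

lemma gam_nz: "\<forall>t<r. cf k1 (n - t) \<noteq> 0 \<Longrightarrow> gam k1 n r \<noteq> 0"
  by (induction r) auto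

lemma coordX:
  assumes cfnz: "\<forall>r<n. cf k1 (n - r) \<noteq> 0"
    and hP: "\<forall>r\<le>n. P' r = lamX (kap k1 k2 k3) r * P r
        + (if r = 0 then 0 else \<i> * (-1)^(r - 1) * cf k1 (Suc (n - r)) * P (r - 1))"
  shows "vec n (gam k1 n) P' = matact n (EXm n (pa k1 k2 k3 n)) (vec n (gam k1 n) P)"
proof
  fix r
  show "vec n (gam k1 n) P' r = matact n (EXm n (pa k1 k2 k3 n)) (vec n (gam k1 n) P) r"
  proof (cases "r \<le> n")
    case False
    then show ?thesis by (simp add: vec_def matact_def)
  next
    case True
    note mX = matact_X[OF True] lamX_Eth[where n=n]
    show ?thesis
    proof (cases r)
      case 0
      then show ?thesis using True hP mX by (simp add: vec_def)
    next
      case (Suc m)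
      then have m: "m < n" "Suc (n - Suc m) = n - m" using True by auto
      have g: "gam k1 n (Suc m) * (\<i> * (-1)^m * cf k1 (n - m)) = gam k1 n m"
        using gam_rec cfnz m by blast
      have cfm: "cf k1 (n - m) \<noteq> 0" using cfnz m by blast
      have hh: "P' (Suc m) = lamX (kap k1 k2 k3) (Suc m) * P (Suc m) + \<i> * (-1)^m * cf k1 (n - m) * P m"
        using hP True Suc m by auto
      show ?thesis using True Suc
        apply (simp add: vec_def matact_X_Suc hh lamX_Eth[where n=n])
        by (simp add: field_simps cfm)
    qed
  qed
qed


lemma Eth_pa_sum: "Eth n (pa k1 k2 k3 n) r + Eth n (pa k1 k2 k3 n) (Suc r) = - ((-1)^r)"
  unfolding Eth_pa by (simp add: algebra_simps)

lemma Eth_pb_sum: "Suc m \<le> n \<Longrightarrow> Eth n (pb k1 k2 k3 n) m + Eth n (pb k1 k2 k3 n) (Suc m) = - ((-1)^m)"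
  by (simp add: Eth_pb algebra_simps)

lemma m1_pow_eq: "odd n \<Longrightarrow> r < n \<Longrightarrow> (-1::complex)^(n - r - 1) = (-1)^r"
proof -
  assume "odd n" "r < n"
  then have "even (n - r - 1) \<longleftrightarrow> even r" by auto
  then show ?thesis by (cases "even r") auto
qed

lemma alg_Y: "(s::complex) * s = 1 \<Longrightarrow> (G * (\<i> * s * c1)) * (L * P - \<i> * s * c2 * Q) = L * ((G * (\<i> * s * c1)) * P) + c1 * c2 * (G * Q)"
proof -
  assume s: "s * s = 1"
  have "(G * (\<i> * s * c1)) * (L * P - \<i> * s * c2 * Q) = L * ((G * (\<i> * s * c1)) * P) - (\<i> * \<i>) * (s * s) * c1 * c2 * (G * Q)"
    by (simp add: algebra_simps)
  then show ?thesis using s by simp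
qed

lemma coordY:
  assumes n: "odd n" and cfnz: "\<forall>r<n. cf k1 (n - r) \<noteq> 0"
    and hP: "\<forall>r\<le>n. P' r = lamY (kap k1 k2 k3) (n - r) * P r
        - (if r < n then \<i> * (-1)^(n - r - 1) * cf k2 (Suc r) * P (Suc r) else 0)"
  shows "vec n (gam k1 n) P' = matact n (EYm n (pa k1 k2 k3 n) (pb k1 k2 k3 n) (pc k1 k2 k3 n)) (vec n (gam k1 n) P)"
proof
  fix r
  show "vec n (gam k1 n) P' r = matact n (EYm n (pa k1 k2 k3 n) (pb k1 k2 k3 n) (pc k1 k2 k3 n)) (vec n (gam k1 n) P) r"
  proof (cases "r \<le> n")
    case False
    then show ?thesis by (simp add: vec_def matact_def)
  next
    case True
    note mY = matact_Y[OF True] lamY_Eth[OF n True]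
    show ?thesis
    proof (cases "r < n")
      case False
      then have "r = n" using True by simp
      then show ?thesis using True hP mY by (simp add: vec_def)
    next
      case lt: True
      have cfm: "cf k1 (n - r) \<noteq> 0" using cfnz lt by blast
      have g: "gam k1 n r = gam k1 n (Suc r) * (\<i> * (-1)^r * cf k1 (n - r))"
        using gam_rec[OF cfm] by simp
      have hh: "P' r = Eth n (pb k1 k2 k3 n) r * P r - \<i> * (-1)^r * cf k2 (Suc r) * P (Suc r)"
        using hP True lt m1_pow_eq[OF n lt] mY(2) by auto
      have e: "Eph n (pa k1 k2 k3 n) (pb k1 k2 k3 n) (pc k1 k2 k3 n) (Suc r) = cf k1 (n - r) * cf k2 (Suc r)"
        using Eph_cf[OF n lt] by simp
      have pp: "(-1::complex)^r * (-1)^r = 1" by (simp add: power_mult_distrib[symmetric])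
      have "vec n (gam k1 n) P' r = gam k1 n r * P' r" using True by (simp add: vec_def)
      also have "\<dots> = Eth n (pb k1 k2 k3 n) r * (gam k1 n r * P r) + cf k1 (n - r) * cf k2 (Suc r) * (gam k1 n (Suc r) * P (Suc r))"
        unfolding hh g by (rule alg_Y[OF pp])
      also have "\<dots> = matact n (EYm n (pa k1 k2 k3 n) (pb k1 k2 k3 n) (pc k1 k2 k3 n)) (vec n (gam k1 n) P) r"
        unfolding mY(1) e using True lt by (simp add: vec_def)
      finally show ?thesis .
    qed
  qed
qed


lemma alg_Z:
  assumes "(sm::complex) * sm = 1" "s * s = 1"
  shows "(gp * (\<i> * s * c1)) * (Z * P + \<i> * c2 * Q - \<i> * c1m * R)
    = (- sm) * (((gp * (\<i> * s * c1)) * (\<i> * sm * c1m)) * R) + Z * ((gp * (\<i> * s * c1)) * P) + c1 * c2 * (- s) * (gp * Q)"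
proof -
  have "(gp * (\<i> * s * c1)) * (Z * P + \<i> * c2 * Q - \<i> * c1m * R)
    = (- (sm * sm)) * (((gp * (\<i> * s * c1)) * (\<i> * c1m)) * R) + Z * ((gp * (\<i> * s * c1)) * P) + c1 * c2 * (\<i> * \<i>) * (s * s) * s * (gp * Q)"
    using assms by (simp add: algebra_simps)
  then show ?thesis using assms by (simp add: algebra_simps)
qed

lemma alg_Z0:
  assumes "(s::complex) * s = 1"
  shows "(gp * (\<i> * s * c1)) * (Z * P + \<i> * c2 * Q)
    = Z * ((gp * (\<i> * s * c1)) * P) + c1 * c2 * (- s) * (gp * Q)"
  by (simp add: algebra_simps)

lemma alg_Zn:
  assumes "(sm::complex) * sm = 1"
  shows "g0 * (Z * P - \<i> * c1m * R)
    = (- sm) * ((g0 * (\<i> * sm * c1m)) * R) + Z * (g0 * P)"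
proof -
  have "g0 * (Z * P - \<i> * c1m * R) = (- (sm * sm)) * ((g0 * (\<i> * c1m)) * R) + Z * (g0 * P)"
    using assms by (simp add: algebra_simps)
  then show ?thesis by (simp add: algebra_simps)
qed

lemma sq_m1: "(-1::complex)^r * (-1)^r = 1" by (simp add: power_mult_distrib[symmetric])

lemma coordZ:
  assumes n: "odd n" and cfnz: "\<forall>r<n. cf k1 (n - r) \<noteq> 0"
    and hP: "\<forall>r\<le>n. P' r = zdiag (kap k1 k2 k3) (n - r) r * P r
        + (if r < n then \<i> * cf k2 (Suc r) * P (Suc r) else 0)
        - (if r = 0 then 0 else \<i> * cf k1 (Suc (n - r)) * P (r - 1))"
  shows "vec n (gam k1 n) P' = Eact n (pa k1 k2 k3 n) (pb k1 k2 k3 n) (pc k1 k2 k3 n) GZ (vec n (gam k1 n) P)"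
proof
  fix r
  let ?a = "pa k1 k2 k3 n" and ?b = "pb k1 k2 k3 n" and ?c = "pc k1 k2 k3 n"
  show "vec n (gam k1 n) P' r = Eact n ?a ?b ?c GZ (vec n (gam k1 n) P) r"
  proof (cases "r \<le> n")
    case False
    then show ?thesis by (simp add: vec_def matact_def Eact_def)
  next
    case True
    have EZ: "Eact n ?a ?b ?c GZ (vec n (gam k1 n) P) r =
      (if r = 0 then 0 else (Eth n ?b (r - 1) + Eth n ?b r) * vec n (gam k1 n) P (r - 1))
      + (2 * Eth n ?a r * Eth n ?b r + (if r = 0 then 0 else Eph n ?a ?b ?c r) + (if r < n then Eph n ?a ?b ?c (Suc r) else 0)
          - Kc k1 k2 k3 n) * vec n (gam k1 n) P r
      + (if r < n then Eph n ?a ?b ?c (Suc r) * (Eth n ?a r + Eth n ?a (Suc r)) * vec n (gam k1 n) P (Suc r) else 0)"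
      using Eact_Z_pt[OF True] by (simp add: Kc_def)
    define Z where "Z = zdiag (kap k1 k2 k3) (n - r) r"
    have Zeq: "Z = 2 * Eth n ?a r * Eth n ?b r + (if r = 0 then 0 else Eph n ?a ?b ?c r) + (if r < n then Eph n ?a ?b ?c (Suc r) else 0)
          - Kc k1 k2 k3 n"
    proof -
      have A: "(if r = 0 then 0 else Eph n ?a ?b ?c r) = cf k1 (Suc (n - r)) * cf k2 r"
      proof (cases r)
        case (Suc m)
        then have "m < n" "n - m = Suc (n - r)" using True by auto
        then show ?thesis using Eph_cf[OF n, of m k1 k2 k3] Suc by simp
      qed simp
      have B: "(if r < n then Eph n ?a ?b ?c (Suc r) else 0) = cf k1 (n - r) * cf k2 (Suc r)"
        using Eph_cf[OF n, of r k1 k2 k3] True by (cases "r < n") auto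
      show ?thesis unfolding A B Z_def using zdiag_id[OF n True] by simp
    qed
    have hh: "P' r = Z * P r + (if r < n then \<i> * cf k2 (Suc r) * P (Suc r) else 0)
        - (if r = 0 then 0 else \<i> * cf k1 (Suc (n - r)) * P (r - 1))"
      using hP True Z_def by simp
    have gr: "r < n \<Longrightarrow> gam k1 n r = gam k1 n (Suc r) * (\<i> * (-1)^r * cf k1 (n - r))"
      using gam_rec cfnz by simp
    have EZ2: "Eact n ?a ?b ?c GZ (vec n (gam k1 n) P) r =
      (if r = 0 then 0 else (Eth n ?b (r - 1) + Eth n ?b r) * (gam k1 n (r - 1) * P (r - 1)))
      + Z * (gam k1 n r * P r)
      + (if r < n then Eph n ?a ?b ?c (Suc r) * (Eth n ?a r + Eth n ?a (Suc r)) * (gam k1 n (Suc r) * P (Suc r)) else 0)"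
      unfolding EZ Zeq using True diff_le_self[of r 1] le_trans by (auto simp add: vec_def)
    show ?thesis
    proof (cases r)
      case 0
      then have lt: "r < n" using n by (cases n) auto
      have e: "Eph n ?a ?b ?c (Suc r) = cf k1 (n - r) * cf k2 (Suc r)"
        using Eph_cf[OF n lt] by simp
      have "vec n (gam k1 n) P' r = gam k1 n r * (Z * P r + \<i> * cf k2 (Suc r) * P (Suc r))"
        using True lt 0 unfolding vec_def hh by simp
      also have "\<dots> = Z * (gam k1 n r * P r) + cf k1 (n - r) * cf k2 (Suc r) * (- ((-1)^r)) * (gam k1 n (Suc r) * P (Suc r))"
        unfolding gr[OF lt] by (rule alg_Z0[OF sq_m1])
      also have "\<dots> = Eact n ?a ?b ?c GZ (vec n (gam k1 n) P) r"
        unfolding EZ2 e Eth_pa_sum using lt 0 by simp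
      finally show ?thesis .
    next
      case (Suc m)
      have cfm: "cf k1 (n - m) \<noteq> 0" using cfnz Suc True by simp
      have gm: "gam k1 n m = gam k1 n r * (\<i> * (-1)^m * cf k1 (n - m))"
        using gam_rec[OF cfm] Suc by simp
      have sb: "Eth n ?b (r - 1) + Eth n ?b r = - ((-1)^m)"
        using Eth_pb_sum[of m n k1 k2 k3] Suc True by simp
      have nm: "Suc (n - r) = n - m" using Suc True by simp
      show ?thesis
      proof (cases "r < n")
        case lt: True
        have e: "Eph n ?a ?b ?c (Suc r) = cf k1 (n - r) * cf k2 (Suc r)"
          using Eph_cf[OF n lt] by simp
        have "vec n (gam k1 n) P' r = gam k1 n r * (Z * P r + \<i> * cf k2 (Suc r) * P (Suc r) - \<i> * cf k1 (n - m) * P m)"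
          using True lt Suc nm unfolding vec_def hh by simp
        also have "\<dots> = (- ((-1)^m)) * ((gam k1 n r * (\<i> * (-1)^m * cf k1 (n - m))) * P m) + Z * (gam k1 n r * P r)
             + cf k1 (n - r) * cf k2 (Suc r) * (- ((-1)^r)) * (gam k1 n (Suc r) * P (Suc r))"
          unfolding gr[OF lt] by (rule alg_Z[OF sq_m1 sq_m1])
        also have "\<dots> = Eact n ?a ?b ?c GZ (vec n (gam k1 n) P) r"
          unfolding EZ2 e Eth_pa_sum sb gm[symmetric] using lt Suc by simp
        finally show ?thesis .
      next
        case False
        have "vec n (gam k1 n) P' r = gam k1 n r * (Z * P r - \<i> * cf k1 (n - m) * P m)"
          using True False Suc nm unfolding vec_def hh by simp
        also have "\<dots> = (- ((-1)^m)) * ((gam k1 n r * (\<i> * (-1)^m * cf k1 (n - m))) * P m) + Z * (gam k1 n r * P r)"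
          by (rule alg_Zn[OF sq_m1])
        also have "\<dots> = Eact n ?a ?b ?c GZ (vec n (gam k1 n) P) r"
          unfolding EZ2 sb gm[symmetric] using False Suc by simp
        finally show ?thesis .
      qed
    qed
  qed
qed

definition Pc :: "nat \<Rightarrow> spoly \<Rightarrow> nat \<Rightarrow> complex" where
  "Pc n F s = F (False, (n - s, s, 0))"
definition Qc :: "nat \<Rightarrow> spoly \<Rightarrow> nat \<Rightarrow> complex" where
  "Qc n F s = (-1)^s * F (True, (n - s, s, 0))"

lemma kap_simps[simp]: "kap k1 k2 k3 1 = k1" "kap k1 k2 k3 2 = k2" "kap k1 k2 k3 3 = k3"
  by (simp_all add: kap_def)
lemma kap_Suc0[simp]: "kap k1 k2 k3 (Suc 0) = k1" by (simp add: kap_def)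

lemma algQ: "(s::complex) * s = 1 \<Longrightarrow> G = L * A - \<i> * s * c * B \<Longrightarrow> (- s) * G = L * ((- s) * A) + \<i> * s * c * (s * B)"
proof -
  assume s: "s * s = 1" and G: "G = L * A - \<i> * s * c * B"
  have "(- s) * G = L * ((- s) * A) + \<i> * (s * s) * c * B" unfolding G by (simp add: algebra_simps)
  also have "\<dots> = L * ((- s) * A) + \<i> * s * c * (s * B)" by (simp add: algebra_simps)
  finally show ?thesis .
qed

lemma sliceX_P:
  assumes D: "Dirac (kap k1 k2 k3) F = (\<lambda>_. 0)" and r: "r \<le> n"
  shows "Pc n (Mact k1 k2 k3 GX F) r = lamX (kap k1 k2 k3) r * Pc n F r
        + (if r = 0 then 0 else \<i> * (-1)^(r - 1) * cf k1 (Suc (n - r)) * Pc n F (r - 1))"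
proof (cases r)
  case 0 then show ?thesis using X_0[of "kap k1 k2 k3" F False n] by (simp add: Pc_def Mact_def)
next
  case (Suc m)
  then have e: "Suc (n - Suc m) = n - m" using r by simp
  show ?thesis using X_F_Suc[OF D, of "n - Suc m" m] Suc e by (simp add: Pc_def Mact_def)
qed

lemma sliceX_Q:
  assumes D: "Dirac (kap k1 k2 k3) F = (\<lambda>_. 0)" and r: "r \<le> n"
  shows "Qc n (Mact k1 k2 k3 GX F) r = lamX (kap k1 k2 k3) r * Qc n F r
        + (if r = 0 then 0 else \<i> * (-1)^(r - 1) * cf k1 (Suc (n - r)) * Qc n F (r - 1))"
proof (cases r)
  case 0 then show ?thesis using X_0[of "kap k1 k2 k3" F True n] by (simp add: Qc_def Mact_def)
next
  case (Suc m)
  then have e: "Suc (n - Suc m) = n - m" using r by simp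
  have G: "genop (kap k1 k2 k3) 1 2 3 F (True, (n - Suc m, Suc m, 0)) = lamX (kap k1 k2 k3) (Suc m) * F (True, (n - Suc m, Suc m, 0))
          - \<i> * (-1) ^ m * cf k1 (n - m) * F (True, (n - m, m, 0))"
    using X_T_Suc[OF D, of "n - Suc m" m] e by simp
  show ?thesis using algQ[OF sq_m1 G] Suc e unfolding Qc_def Mact_def by simp
qed


lemma sliceY_P:
  assumes D: "Dirac (kap k1 k2 k3) F = (\<lambda>_. 0)" and r: "r \<le> n"
  shows "Pc n (Mact k1 k2 k3 GY F) r = lamY (kap k1 k2 k3) (n - r) * Pc n F r
        - (if r < n then \<i> * (-1)^(n - r - 1) * cf k2 (Suc r) * Pc n F (Suc r) else 0)"
proof (cases "r < n")
  case False
  then have "r = n" using r by simp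
  then show ?thesis using Y_0[of "kap k1 k2 k3" F False n] by (simp add: Pc_def Mact_def)
next
  case True
  then have e: "Suc (n - Suc r) = n - r" "n - r - 1 = n - Suc r" by auto
  have G: "genop (kap k1 k2 k3) 2 3 1 F (False, (n - r, r, 0)) = lamY (kap k1 k2 k3) (n - r) * F (False, (n - r, r, 0))
          - \<i> * (-1) ^ (n - Suc r) * cf k2 (Suc r) * F (False, (n - Suc r, Suc r, 0))"
    using Y_F_Suc[OF D, of "n - Suc r" r] e by simp
  show ?thesis using G True e unfolding Pc_def Mact_def by simp
qed

lemma algQY: "G = L * A + \<i> * t * c * B \<Longrightarrow> (s::complex) * G = L * (s * A) - \<i> * t * c * ((- s) * B)"
  by (simp add: algebra_simps)

lemma sliceY_Q:
  assumes D: "Dirac (kap k1 k2 k3) F = (\<lambda>_. 0)" and r: "r \<le> n"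
  shows "Qc n (Mact k1 k2 k3 GY F) r = lamY (kap k1 k2 k3) (n - r) * Qc n F r
        - (if r < n then \<i> * (-1)^(n - r - 1) * cf k2 (Suc r) * Qc n F (Suc r) else 0)"
proof (cases "r < n")
  case False
  then have "r = n" using r by simp
  then show ?thesis using Y_0[of "kap k1 k2 k3" F True n] by (simp add: Qc_def Mact_def)
next
  case True
  then have e: "Suc (n - Suc r) = n - r" "n - r - 1 = n - Suc r" by auto
  have G: "genop (kap k1 k2 k3) 2 3 1 F (True, (n - r, r, 0)) = lamY (kap k1 k2 k3) (n - r) * F (True, (n - r, r, 0))
          + \<i> * (-1) ^ (n - Suc r) * cf k2 (Suc r) * F (True, (n - Suc r, Suc r, 0))"
    using Y_T_Suc[OF D, of "n - Suc r" r] e by simp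
  show ?thesis using algQY[OF G, of "(-1)^r"] True e unfolding Qc_def Mact_def by simp
qed

lemma sliceZ_P:
  assumes n: "odd n" and r: "r \<le> n"
  shows "Pc n (Mact k1 k2 k3 GZ F) r = zdiag (kap k1 k2 k3) (n - r) r * Pc n F r
        + (if r < n then \<i> * cf k2 (Suc r) * Pc n F (Suc r) else 0)
        - (if r = 0 then 0 else \<i> * cf k1 (Suc (n - r)) * Pc n F (r - 1))"
proof -
  have p1: "(-1::complex)^(n - r - 1 + r) = 1" if "r < n"
  proof -
    have "n - r - 1 + r = n - 1" using that by simp
    then show ?thesis using n by simp
  qed
  have p2: "(-1::complex)^(n - r + r - 1) = 1"
  proof -
    have "n - r + r - 1 = n - 1" using r by simp
    then show ?thesis using n by simp
  qed
  have Z: "genop (kap k1 k2 k3) 3 1 2 F (False, (n - r, r, 0)) = zdiag (kap k1 k2 k3) (n - r) r * F (False, (n - r, r, 0))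
     + (if n - r = 0 then 0 else \<i> * (-1)^(n - r - 1 + r) * cf (kap k1 k2 k3 2) (Suc r) * F (False, (n - r - 1, Suc r, 0)))
     - (if r = 0 then 0 else \<i> * (-1)^(n - r + r - 1) * cf (kap k1 k2 k3 1) (Suc (n - r)) * F (False, (Suc (n - r), r - 1, 0)))"
    by (rule Z_F)
  have A: "(if n - r = 0 then 0 else \<i> * (-1)^(n - r - 1 + r) * cf (kap k1 k2 k3 2) (Suc r) * F (False, (n - r - 1, Suc r, 0)))
      = (if r < n then \<i> * cf k2 (Suc r) * Pc n F (Suc r) else 0)"
  proof (cases "r < n")
    case True
    then have "n - r - 1 = n - Suc r" "n - r \<noteq> 0" by auto
    then show ?thesis using True p1[OF True] by (simp add: Pc_def)
  next
    case False
    then show ?thesis using r by simp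
  qed
  have B: "(if r = 0 then 0 else \<i> * (-1)^(n - r + r - 1) * cf (kap k1 k2 k3 1) (Suc (n - r)) * F (False, (Suc (n - r), r - 1, 0)))
      = (if r = 0 then 0 else \<i> * cf k1 (Suc (n - r)) * Pc n F (r - 1))"
  proof (cases r)
    case (Suc m)
    then have "Suc (n - r) = n - m" using r by auto
    then show ?thesis using Suc p2 by (simp add: Pc_def)
  qed simp
  have M: "Pc n (Mact k1 k2 k3 GZ F) r = genop (kap k1 k2 k3) 3 1 2 F (False, (n - r, r, 0))"
    by (simp add: Pc_def Mact_def)
  show ?thesis unfolding M Z A B by (simp add: Pc_def)
qed

lemma algZQ: "(s::complex) * (z * A - x * B + y * C) = z * (s * A) + x * ((- s) * B) - y * ((- s) * C)"
  by (simp add: algebra_simps)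

lemma sliceZ_Q:
  assumes n: "odd n" and r: "r \<le> n"
  shows "Qc n (Mact k1 k2 k3 GZ F) r = zdiag (kap k1 k2 k3) (n - r) r * Qc n F r
        + (if r < n then \<i> * cf k2 (Suc r) * Qc n F (Suc r) else 0)
        - (if r = 0 then 0 else \<i> * cf k1 (Suc (n - r)) * Qc n F (r - 1))"
proof -
  have p1: "(-1::complex)^(n - r - 1 + r) = 1" if "r < n"
  proof -
    have "n - r - 1 + r = n - 1" using that by simp
    then show ?thesis using n by simp
  qed
  have p2: "(-1::complex)^(n - r + r - 1) = 1"
  proof -
    have "n - r + r - 1 = n - 1" using r by simp
    then show ?thesis using n by simp
  qed
  define x where "x = (if r < n then \<i> * cf k2 (Suc r) else 0)"
  define y where "y = (if r = 0 then 0 else \<i> * cf k1 (Suc (n - r)))"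
  define Tp where "Tp = F (True, (n - Suc r, Suc r, 0))"
  define Tm where "Tm = F (True, (n - (r - 1), r - 1, 0))"
  have Z: "genop (kap k1 k2 k3) 3 1 2 F (True, (n - r, r, 0)) = zdiag (kap k1 k2 k3) (n - r) r * F (True, (n - r, r, 0))
     - (if n - r = 0 then 0 else \<i> * (-1)^(n - r - 1 + r) * cf (kap k1 k2 k3 2) (Suc r) * F (True, (n - r - 1, Suc r, 0)))
     + (if r = 0 then 0 else \<i> * (-1)^(n - r + r - 1) * cf (kap k1 k2 k3 1) (Suc (n - r)) * F (True, (Suc (n - r), r - 1, 0)))"
    by (rule Z_T)
  have A: "(if n - r = 0 then 0 else \<i> * (-1)^(n - r - 1 + r) * cf (kap k1 k2 k3 2) (Suc r) * F (True, (n - r - 1, Suc r, 0)))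
      = x * Tp"
  proof (cases "r < n")
    case True
    then have "n - r - 1 = n - Suc r" "n - r \<noteq> 0" by auto
    then show ?thesis using True p1[OF True] by (simp add: x_def Tp_def)
  next
    case False
    then show ?thesis using r by (simp add: x_def)
  qed
  have B: "(if r = 0 then 0 else \<i> * (-1)^(n - r + r - 1) * cf (kap k1 k2 k3 1) (Suc (n - r)) * F (True, (Suc (n - r), r - 1, 0)))
      = y * Tm"
  proof (cases r)
    case (Suc m)
    then have "Suc (n - r) = n - m" using r by auto
    then show ?thesis using Suc p2 by (simp add: y_def Tm_def)
  qed (simp add: y_def)
  have M: "Qc n (Mact k1 k2 k3 GZ F) r = (-1)^r * genop (kap k1 k2 k3) 3 1 2 F (True, (n - r, r, 0))"
    by (simp add: Qc_def Mact_def)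
  have Q1: "(if r < n then \<i> * cf k2 (Suc r) * Qc n F (Suc r) else 0) = x * ((- ((-1)^r)) * Tp)"
    unfolding x_def Tp_def Qc_def by simp
  have Q2: "(if r = 0 then 0 else \<i> * cf k1 (Suc (n - r)) * Qc n F (r - 1)) = y * ((- ((-1)^r)) * Tm)"
  proof (cases r)
    case (Suc m) then show ?thesis unfolding y_def Tm_def Qc_def by simp
  qed (simp add: y_def)
  have Q0: "Qc n F r = (-1)^r * F (True, (n - r, r, 0))" by (simp add: Qc_def)
  show ?thesis unfolding M Q0 Q1 Q2 Z A B
    by (rule algZQ)
qed

lemma Dirac0: "Dirac k F = (\<lambda>_. 0) \<Longrightarrow> Dirac k F x = 0" by simp

lemma cf3_nz: "Suc c \<le> n \<Longrightarrow> ereal (real n) < tval k3 \<Longrightarrow> cf k3 (Suc c) \<noteq> 0"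
  by (rule cf_nz) (auto intro: le_less_trans[rotated])

lemma slice_det:
  assumes F: "F \<in> Mspace k1 k2 k3 n" and G: "G \<in> Mspace k1 k2 k3 n"
    and t3: "ereal (real n) < tval k3"
    and P: "\<forall>s\<le>n. Pc n F s = Pc n G s" and Q: "\<forall>s\<le>n. Qc n F s = Qc n G s"
  shows "F = G"
proof -
  have dF: "\<And>j \<alpha>. mdeg \<alpha> \<noteq> n \<Longrightarrow> F (j, \<alpha>) = 0" and DF: "Dirac (kap k1 k2 k3) F = (\<lambda>_. 0)"
    using F by (auto simp: Mspace_def)
  have dG: "\<And>j \<alpha>. mdeg \<alpha> \<noteq> n \<Longrightarrow> G (j, \<alpha>) = 0" and DG: "Dirac (kap k1 k2 k3) G = (\<lambda>_. 0)"
    using G by (auto simp: Mspace_def)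
  have "\<forall>a b j. F (j, (a, b, c)) = G (j, (a, b, c))" for c
  proof (induction c)
    case 0
    show ?case
    proof (intro allI)
      fix a b j
      show "F (j, (a, b, 0)) = G (j, (a, b, 0))"
      proof (cases "a + b = n")
        case False
        then show ?thesis using dF[of "(a, b, 0)"] dG[of "(a, b, 0)"] by simp
      next
        case True
        then have a: "a = n - b" "b \<le> n" by auto
        show ?thesis
        proof (cases j)
          case True
          then show ?thesis using Q a by (simp add: Qc_def)
        next
          case False
          then show ?thesis using P a by (simp add: Pc_def)
        qed
      qed
    qed
  next
    case (Suc c)
    show ?case
    proof (intro allI)
      fix a b j
      show "F (j, (a, b, Suc c)) = G (j, (a, b, Suc c))"
      proof (cases "a + b + Suc c = n")
        case False
        then show ?thesis using dF[of "(a, b, Suc c)"] dG[of "(a, b, Suc c)"] by simp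
      next
        case True
        then have nz: "cf k3 (Suc c) \<noteq> 0" using cf3_nz[OF _ t3, of c] by simp
        show ?thesis
        proof (cases j)
          case False
          have e1: "cf k1 (Suc a) * G (True, (Suc a, b, c)) - \<i> * cf k2 (Suc b) * G (True, (a, Suc b, c)) + cf k3 (Suc c) * F (False, (a, b, Suc c)) = 0"
            using Dirac0[OF DF, of "(False, (a, b, c))"] Suc.IH unfolding Dirac_F by simp
          have e2: "cf k1 (Suc a) * G (True, (Suc a, b, c)) - \<i> * cf k2 (Suc b) * G (True, (a, Suc b, c)) + cf k3 (Suc c) * G (False, (a, b, Suc c)) = 0"
            using Dirac0[OF DG, of "(False, (a, b, c))"] unfolding Dirac_F by simp
          have "cf k3 (Suc c) * F (False, (a, b, Suc c)) = cf k3 (Suc c) * G (False, (a, b, Suc c))"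
            using e1 e2 by (metis add_left_cancel)
          then show ?thesis using nz False by simp
        next
          case True
          have e1: "cf k1 (Suc a) * G (False, (Suc a, b, c)) + \<i> * cf k2 (Suc b) * G (False, (a, Suc b, c)) - cf k3 (Suc c) * F (True, (a, b, Suc c)) = 0"
            using Dirac0[OF DF, of "(True, (a, b, c))"] Suc.IH unfolding Dirac_T by simp
          have e2: "cf k1 (Suc a) * G (False, (Suc a, b, c)) + \<i> * cf k2 (Suc b) * G (False, (a, Suc b, c)) - cf k3 (Suc c) * G (True, (a, b, Suc c)) = 0"
            using Dirac0[OF DG, of "(True, (a, b, c))"] unfolding Dirac_T by simp
          have "cf k3 (Suc c) * F (True, (a, b, Suc c)) = cf k3 (Suc c) * G (True, (a, b, Suc c))"
            using e1 e2 by (metis diff_left_imp_eq eq_iff_diff_eq_0)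
          then show ?thesis using nz True by simp
        qed
      qed
    qed
  qed
  then show ?thesis by (intro ext) auto
qed


primrec extc :: "(nat \<Rightarrow> real) \<Rightarrow> (bool \<Rightarrow> nat \<Rightarrow> nat \<Rightarrow> complex) \<Rightarrow> nat \<Rightarrow> bool \<Rightarrow> nat \<Rightarrow> nat \<Rightarrow> complex" where
  "extc k B 0 = B"
| "extc k B (Suc c) = (\<lambda>j a b. if j
      then (cf (k 1) (Suc a) * extc k B c False (Suc a) b + \<i> * cf (k 2) (Suc b) * extc k B c False a (Suc b)) / cf (k 3) (Suc c)
      else - (cf (k 1) (Suc a) * extc k B c True (Suc a) b - \<i> * cf (k 2) (Suc b) * extc k B c True a (Suc b)) / cf (k 3) (Suc c))"

definition extF :: "(nat \<Rightarrow> real) \<Rightarrow> (bool \<Rightarrow> nat \<Rightarrow> nat \<Rightarrow> complex) \<Rightarrow> spoly" where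
  "extF k B = (\<lambda>(j, a, b, c). extc k B c j a b)"

lemma extF_apply[simp]: "extF k B (j, (a, b, c)) = extc k B c j a b"
  by (simp add: extF_def)

lemma extc_deg:
  assumes "\<forall>j a b. a + b \<noteq> n \<longrightarrow> B j a b = 0"
  shows "a + b + c \<noteq> n \<Longrightarrow> extc k B c j a b = 0"
proof (induction c arbitrary: a b j)
  case 0
  then show ?case using assms by simp
next
  case (Suc c)
  have "Suc a + b + c \<noteq> n" "a + Suc b + c \<noteq> n" using Suc.prems by auto
  then show ?case using Suc.IH by simp
qed

lemma extF_Mspace:
  assumes deg: "\<forall>j a b. a + b \<noteq> n \<longrightarrow> B j a b = 0" and t3: "ereal (real n) < tval k3"
  shows "extF (kap k1 k2 k3) B \<in> Mspace k1 k2 k3 n"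
proof -
  let ?k = "kap k1 k2 k3"
  let ?E = "extF ?k B"
  have d: "\<And>j \<alpha>. mdeg \<alpha> \<noteq> n \<Longrightarrow> ?E (j, \<alpha>) = 0"
  proof -
    fix j \<alpha> assume "mdeg \<alpha> \<noteq> n"
    then show "?E (j, \<alpha>) = 0" using extc_deg[OF deg] by (cases \<alpha>) auto
  qed
  have big: "cf k3 (Suc c) = 0 \<Longrightarrow> n < Suc c" for c
    using cf3_nz[OF _ t3, of c] by linarith
  have D: "Dirac ?k ?E x = 0" for x
  proof -
    obtain j a b c where x: "x = (j, (a, b, c))" by (cases x) auto
    show ?thesis
    proof (cases "cf k3 (Suc c) = 0")
      case True
      then have nb: "n < Suc c" using big by blast
      then have z: "extc ?k B c j' (Suc a) b = 0" "extc ?k B c j' a (Suc b) = 0" for j'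
        using extc_deg[OF deg] by auto
      show ?thesis unfolding x using True
        by (cases j) (simp_all add: Dirac_F Dirac_T z)
    next
      case False
      show ?thesis unfolding x using False
        by (cases j) (simp_all add: Dirac_F Dirac_T field_simps)
    qed
  qed
  show ?thesis unfolding Mspace_def using d D by auto
qed

definition PhiA :: "real \<Rightarrow> nat \<Rightarrow> spoly \<Rightarrow> (nat + nat \<Rightarrow> complex)" where
  "PhiA k1 n F = (\<lambda>x. case x of Inl s \<Rightarrow> vec n (gam k1 n) (Pc n F) s | Inr s \<Rightarrow> vec n (gam k1 n) (Qc n F) s)"

lemma PhiA_Inl: "(\<lambda>a. PhiA k1 n F (Inl a)) = vec n (gam k1 n) (Pc n F)"
  by (simp add: PhiA_def)
lemma PhiA_Inr: "(\<lambda>a. PhiA k1 n F (Inr a)) = vec n (gam k1 n) (Qc n F)"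
  by (simp add: PhiA_def)

lemma dsum_act_Inl: "dsum_act A B g f (Inl s) = A g (\<lambda>a. f (Inl a)) s"
  by (simp add: dsum_act_def)
lemma dsum_act_Inr: "dsum_act A B g f (Inr s) = B g (\<lambda>a. f (Inr a)) s"
  by (simp add: dsum_act_def)

lemma partA_hom:
  assumes n: "odd n" and cfnz: "\<forall>r<n. cf k1 (n - r) \<noteq> 0" and u: "u \<in> Mspace k1 k2 k3 n"
  shows "PhiA k1 n (Mact k1 k2 k3 g u) = dsum_act (Eact n (pa k1 k2 k3 n) (pb k1 k2 k3 n) (pc k1 k2 k3 n))
            (Eact n (pa k1 k2 k3 n) (pb k1 k2 k3 n) (pc k1 k2 k3 n)) g (PhiA k1 n u)"
proof -
  have D: "Dirac (kap k1 k2 k3) u = (\<lambda>_. 0)" using u by (simp add: Mspace_def)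
  let ?EA = "Eact n (pa k1 k2 k3 n) (pb k1 k2 k3 n) (pc k1 k2 k3 n)"
  have P: "vec n (gam k1 n) (Pc n (Mact k1 k2 k3 g u)) = ?EA g (vec n (gam k1 n) (Pc n u))"
  proof (cases g)
    case GX
    then show ?thesis unfolding GX Eact_def BIgen.case
      by (intro coordX[OF cfnz]) (simp add: sliceX_P[OF D])
  next
    case GY
    then show ?thesis unfolding GY Eact_def BIgen.case
      by (intro coordY[OF n cfnz]) (simp add: sliceY_P[OF D])
  next
    case GZ
    then show ?thesis unfolding GZ
      by (intro coordZ[OF n cfnz]) (simp add: sliceZ_P[OF n])
  qed
  have Q: "vec n (gam k1 n) (Qc n (Mact k1 k2 k3 g u)) = ?EA g (vec n (gam k1 n) (Qc n u))"
  proof (cases g)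
    case GX
    then show ?thesis unfolding GX Eact_def BIgen.case
      by (intro coordX[OF cfnz]) (simp add: sliceX_Q[OF D])
  next
    case GY
    then show ?thesis unfolding GY Eact_def BIgen.case
      by (intro coordY[OF n cfnz]) (simp add: sliceY_Q[OF D])
  next
    case GZ
    then show ?thesis unfolding GZ
      by (intro coordZ[OF n cfnz]) (simp add: sliceZ_Q[OF n])
  qed
  show ?thesis
  proof
    fix x show "PhiA k1 n (Mact k1 k2 k3 g u) x = dsum_act ?EA ?EA g (PhiA k1 n u) x"
      by (cases x) (simp_all add: dsum_act_Inl dsum_act_Inr PhiA_Inl PhiA_Inr, simp_all add: PhiA_def P[THEN fun_cong] Q[THEN fun_cong])
  qed
qed


lemma gam_nz': "\<forall>r<n. cf k1 (n - r) \<noteq> 0 \<Longrightarrow> s \<le> n \<Longrightarrow> gam k1 n s \<noteq> 0"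
  by (rule gam_nz) auto

theorem partA:
  assumes n: "odd n" and n1: "1 \<le> n"
    and t: "ereal (real n) < min (tval k1) (min (tval k2) (tval k3))"
  shows "bi_iso (Mspace k1 k2 k3 n) (Mact k1 k2 k3) (dsum_car (Ecar n) (Ecar n))
    (dsum_act (Eact n (pa k1 k2 k3 n) (pb k1 k2 k3 n) (pc k1 k2 k3 n)) (Eact n (pa k1 k2 k3 n) (pb k1 k2 k3 n) (pc k1 k2 k3 n)))"
proof -
  have t1: "ereal (real n) < tval k1" and t3: "ereal (real n) < tval k3" using t by auto
  have cfnz: "\<forall>r<n. cf k1 (n - r) \<noteq> 0"
  proof (intro allI impI)
    fix r assume "r < n"
    then show "cf k1 (n - r) \<noteq> 0"
      by (intro cf_nz) (auto intro: le_less_trans[OF _ t1])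
  qed
  have gnz: "\<And>s. s \<le> n \<Longrightarrow> gam k1 n s \<noteq> 0" using gam_nz'[OF cfnz] .
  let ?M = "Mspace k1 k2 k3 n" and ?V = "dsum_car (Ecar n) (Ecar n)"
  have into: "PhiA k1 n ` ?M \<subseteq> ?V"
    by (auto simp: dsum_car_def Ecar_def PhiA_def vec_def)
  have inj: "inj_on (PhiA k1 n) ?M"
  proof (rule inj_onI)
    fix F G assume F: "F \<in> ?M" and G: "G \<in> ?M" and e: "PhiA k1 n F = PhiA k1 n G"
    have P: "\<forall>s\<le>n. Pc n F s = Pc n G s"
    proof (intro allI impI)
      fix s assume s: "s \<le> n"
      have "PhiA k1 n F (Inl s) = PhiA k1 n G (Inl s)" using e by simp
      then show "Pc n F s = Pc n G s" using s gnz[OF s] by (simp add: PhiA_def vec_def)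
    qed
    have Q: "\<forall>s\<le>n. Qc n F s = Qc n G s"
    proof (intro allI impI)
      fix s assume s: "s \<le> n"
      have "PhiA k1 n F (Inr s) = PhiA k1 n G (Inr s)" using e by simp
      then show "Qc n F s = Qc n G s" using s gnz[OF s] by (simp add: PhiA_def vec_def)
    qed
    show "F = G" by (rule slice_det[OF F G t3 P Q])
  qed
  have onto: "?V \<subseteq> PhiA k1 n ` ?M"
  proof
    fix w assume w: "w \<in> ?V"
    define B where "B = (\<lambda>j a b. if a + b = n then (if j then (-1)^b * w (Inr b) / gam k1 n b else w (Inl b) / gam k1 n b) else (0::complex))"
    have deg: "\<forall>j a b. a + b \<noteq> n \<longrightarrow> B j a b = 0" by (simp add: B_def)
    define F where "F = extF (kap k1 k2 k3) B"
    have FM: "F \<in> ?M" unfolding F_def by (rule extF_Mspace[OF deg t3])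
    have wl: "\<And>s. n < s \<Longrightarrow> w (Inl s) = 0" and wr: "\<And>s. n < s \<Longrightarrow> w (Inr s) = 0"
      using w by (auto simp: dsum_car_def Ecar_def)
    have "PhiA k1 n F = w"
    proof
      fix x show "PhiA k1 n F x = w x"
      proof (cases x)
        case (Inl s)
        then show ?thesis using wl[of s] gnz[of s]
          by (cases "s \<le> n") (simp_all add: PhiA_def vec_def Pc_def F_def B_def)
      next
        case (Inr s)
        have pp: "(-1::complex)^s * (-1)^s = 1" by (rule sq_m1)
        show ?thesis using Inr wr[of s] gnz[of s] pp
          by (cases "s \<le> n") (simp_all add: PhiA_def vec_def Qc_def F_def B_def mult.assoc[symmetric])
      qed
    qed
    then show "w \<in> PhiA k1 n ` ?M" using FM by blast
  qed
  have bij: "bij_betw (PhiA k1 n) ?M ?V"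
    unfolding bij_betw_def using inj into onto by blast
  show ?thesis unfolding bi_iso_def
  proof (intro exI conjI ballI allI)
    show "bij_betw (PhiA k1 n) ?M ?V" by (rule bij)
  next
    fix u v show "PhiA k1 n (\<lambda>x. u x + v x) = (\<lambda>y. PhiA k1 n u y + PhiA k1 n v y)"
      by (rule ext, simp split: sum.split add: PhiA_def vec_def Pc_def Qc_def algebra_simps)
  next
    fix c u show "PhiA k1 n (\<lambda>x. c * u x) = (\<lambda>y. c * PhiA k1 n u y)"
      by (rule ext, simp split: sum.split add: PhiA_def vec_def Pc_def Qc_def algebra_simps)
  next
    fix g u assume "u \<in> ?M"
    then show "PhiA k1 n (Mact k1 k2 k3 g u) = dsum_act (Eact n (pa k1 k2 k3 n) (pb k1 k2 k3 n) (pc k1 k2 k3 n))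
            (Eact n (pa k1 k2 k3 n) (pb k1 k2 k3 n) (pc k1 k2 k3 n)) g (PhiA k1 n u)"
      by (rule partA_hom[OF n cfnz])
  qed
qed

definition Nn :: "complex \<Rightarrow> nat \<Rightarrow> nat \<Rightarrow> complex" where
  "Nn \<beta> r j = (if even r \<and> odd j then 0
      else of_nat ((r div 2) choose (j div 2)) * pochhammer \<beta> ((r + 1) div 2 - (j + 1) div 2))"

lemma Nn_ee: "Nn \<beta> (2 * R) (2 * J) = of_nat (R choose J) * pochhammer \<beta> (R - J)"
  unfolding Nn_def by simp
lemma Nn_eo: "Nn \<beta> (2 * R) (Suc (2 * J)) = 0"
  unfolding Nn_def by simp
lemma Nn_oe: "Nn \<beta> (Suc (2 * R)) (2 * J) = of_nat (R choose J) * pochhammer \<beta> (Suc R - J)"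
  unfolding Nn_def by simp
lemma Nn_oo: "Nn \<beta> (Suc (2 * R)) (Suc (2 * J)) = of_nat (R choose J) * pochhammer \<beta> (R - J)"
  unfolding Nn_def by simp

lemma poch_shift: "J \<le> R \<Longrightarrow> pochhammer (\<beta>::complex) (Suc R - J) = pochhammer \<beta> (R - J) * (\<beta> + of_nat R - of_nat J)"
  by (simp add: Suc_diff_le pochhammer_Suc of_nat_diff)

lemma binom_key: "(J + 1) * (R choose (J + 1)) = (R - J) * (R choose J)"
  using binomial_absorption[of J R] binomial_absorb_comp[of R J] by simp

lemma binom_key_c: "of_nat (J + 1) * (of_nat (R choose (J + 1)) :: complex) = of_nat (R - J) * of_nat (R choose J)"
  by (metis binom_key of_nat_mult)

lemma lin0: "(x::complex) = 0 \<Longrightarrow> L = c * x \<Longrightarrow> L = 0" by simp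

lemma parity_cases:
  obtains R where "r = 2 * R" | R where "r = Suc (2 * R)"
  by (cases "even r") (auto elim: evenE oddE)


definition rhoP :: "nat \<Rightarrow> complex \<Rightarrow> complex \<Rightarrow> complex \<Rightarrow> nat \<Rightarrow> complex" where
  "rhoP d a \<beta> c t = (if odd t then - (of_nat t + 1) else ((a + \<beta> - (of_nat d - 1) / 2 + of_nat t)^2 - c^2) / 2)"

lemma Nn_big: "r < j \<Longrightarrow> Nn \<beta> r j = 0"
  unfolding Nn_def by (auto simp: binomial_eq_0_iff elim!: evenE oddE)

lemma NI1:
  "(Eth d a r - Eth d a j) * Nn \<beta> r j + (if r = 0 then 0 else rhoP d a \<beta> c (r - 1) * Nn \<beta> (r - 1) j)
     - rhoP d a (- \<beta>) c j * Nn \<beta> r (Suc j) = 0"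
proof (cases r rule: parity_cases)
  case (1 R)
  show ?thesis
  proof (cases j rule: parity_cases)
    case (1 J)
    have n1: "Nn \<beta> r (Suc j) = 0" using 1 \<open>r = 2 * R\<close> Nn_eo by simp
    show ?thesis
    proof (cases R)
      case 0
      then show ?thesis using 1 \<open>r = 2 * R\<close> n1 Nn_big[of 0 j \<beta>] by (cases J) (simp_all add: Nn_ee)
    next
      case (Suc R')
      have a: "Nn \<beta> r j = of_nat (R choose J) * pochhammer \<beta> (R - J)" using 1 \<open>r = 2*R\<close> Nn_ee by simp
      have b: "Nn \<beta> (r - 1) j = of_nat (R' choose J) * pochhammer \<beta> (R - J)"
        using 1 \<open>r = 2*R\<close> Suc Nn_oe[of \<beta> R' J] by simp
      have rh: "rhoP d a \<beta> c (r - 1) = - (2 * of_nat R)" using \<open>r = 2*R\<close> Suc by (simp add: rhoP_def)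
      have th: "Eth d a r - Eth d a j = 2 * (of_nat R - of_nat J)" using 1 \<open>r = 2*R\<close> by (simp add: Eth_def field_simps)
      have bk: "of_nat (R - J) * (of_nat (R choose J) :: complex) = of_nat R * of_nat (R' choose J)"
        using binomial_absorb_comp[of R J] Suc by (metis diff_Suc_1 of_nat_mult)
      have bk2: "(of_nat R - of_nat J) * (of_nat (R choose J) :: complex) = of_nat R * of_nat (R' choose J)"
      proof (cases "J \<le> R")
        case True then show ?thesis using bk by (simp add: of_nat_diff)
      next
        case False
        then have z1: "R choose J = 0" and z2: "R' choose J = 0" using Suc by (simp_all add: binomial_eq_0)
        show ?thesis unfolding z1 z2 by simp
      qed
      have x0: "(of_nat R - of_nat J) * (of_nat (R choose J) :: complex) - of_nat R * of_nat (R' choose J) = 0"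
        using bk2 by simp
      show ?thesis unfolding a b rh th n1 using \<open>r = 2*R\<close> Suc
        by (intro lin0[OF x0, where c = "2 * pochhammer \<beta> (R - J)"]) (simp add: algebra_simps)
    qed
  next
    case (2 J)
    have z: "Nn \<beta> r j = 0" using 2 \<open>r = 2 * R\<close> Nn_eo by simp
    show ?thesis
    proof (cases R)
      case 0
      then show ?thesis using 2 \<open>r = 2 * R\<close> z
        by (simp add: Nn_def)
    next
      case (Suc R')
      have b: "Nn \<beta> (r - 1) j = of_nat (R' choose J) * pochhammer \<beta> (R' - J)"
        using 2 \<open>r = 2*R\<close> Suc Nn_oo[of \<beta> R' J] by simp
      have c: "Nn \<beta> r (Suc j) = of_nat (Suc R' choose Suc J) * pochhammer \<beta> (R' - J)"
        using 2 \<open>r = 2*R\<close> Suc Nn_ee[of \<beta> R "Suc J"] by simp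
      have rh: "rhoP d a \<beta> c (r - 1) = - (2 * of_nat (Suc R'))" using \<open>r = 2*R\<close> Suc by (simp add: rhoP_def)
      have sg: "rhoP d a (- \<beta>) c j = - (2 * of_nat (Suc J))" using 2 by (simp add: rhoP_def)
      have bk: "of_nat (Suc R') * (of_nat (R' choose J) :: complex) = of_nat (Suc R' choose Suc J) * of_nat (Suc J)"
        by (metis Suc_times_binomial_eq of_nat_mult)
      have x0: "of_nat (Suc R') * (of_nat (R' choose J) :: complex) - of_nat (Suc R' choose Suc J) * of_nat (Suc J) = 0"
        using bk by simp
      show ?thesis unfolding z b c rh sg using \<open>r = 2*R\<close> Suc
        by (intro lin0[OF x0, where c = "- 2 * pochhammer \<beta> (R' - J)"]) (simp add: algebra_simps)
    qed
  qed
next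
  case (2 R)
  show ?thesis
  proof (cases j rule: parity_cases)
    case (1 J)
    have a: "Nn \<beta> r j = of_nat (R choose J) * pochhammer \<beta> (Suc R - J)" using 1 \<open>r = Suc (2*R)\<close> Nn_oe by simp
    have b: "Nn \<beta> (r - 1) j = of_nat (R choose J) * pochhammer \<beta> (R - J)" using 1 \<open>r = Suc (2*R)\<close> Nn_ee by simp
    have c: "Nn \<beta> r (Suc j) = of_nat (R choose J) * pochhammer \<beta> (R - J)" using 1 \<open>r = Suc (2*R)\<close> Nn_oo by simp
    show ?thesis
    proof (cases "J \<le> R")
      case False
      then have z1: "R choose J = 0" by (simp add: binomial_eq_0)
      show ?thesis unfolding a b c z1 by simp
    next
      case True
      have key: "(Eth d a r - Eth d a j) * (\<beta> + of_nat R - of_nat J) + rhoP d a \<beta> c (r - 1) - rhoP d a (- \<beta>) c j = 0"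
        using 1 \<open>r = Suc (2*R)\<close> by (simp add: Eth_def rhoP_def field_simps power2_eq_square)
      show ?thesis unfolding a b c poch_shift[OF True] using \<open>r = Suc (2*R)\<close>
        by (intro lin0[OF key, where c = "of_nat (R choose J) * pochhammer \<beta> (R - J)"]) (simp add: algebra_simps)
    qed
  next
    case (2 J)
    have a: "Nn \<beta> r j = of_nat (R choose J) * pochhammer \<beta> (R - J)" using 2 \<open>r = Suc (2*R)\<close> Nn_oo by simp
    have b: "Nn \<beta> (r - 1) j = 0" using 2 \<open>r = Suc (2*R)\<close> Nn_eo by simp
    have c: "Nn \<beta> r (Suc j) = of_nat (R choose Suc J) * pochhammer \<beta> (R - J)"
      using 2 \<open>r = Suc (2*R)\<close> Nn_oe[of \<beta> R "Suc J"] by simp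
    have th: "Eth d a r - Eth d a j = 2 * (of_nat J - of_nat R)" using 2 \<open>r = Suc (2*R)\<close> by (simp add: Eth_def field_simps)
    have sg: "rhoP d a (- \<beta>) c j = - (2 * of_nat (Suc J))" using 2 by (simp add: rhoP_def)
    have bk: "of_nat (Suc J) * (of_nat (R choose Suc J) :: complex) = (of_nat R - of_nat J) * of_nat (R choose J)"
    proof (cases "J \<le> R")
      case True then show ?thesis using binom_key_c[of J R] by (simp add: of_nat_diff)
    next
      case False
      then have z1: "R choose J = 0" and z2: "R choose Suc J = 0" by (simp_all add: binomial_eq_0)
      show ?thesis unfolding z1 z2 by simp
    qed
    have x0: "of_nat (Suc J) * (of_nat (R choose Suc J) :: complex) - (of_nat R - of_nat J) * of_nat (R choose J) = 0"
      using bk by simp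
    show ?thesis unfolding a b c th sg using \<open>r = Suc (2*R)\<close>
      by (intro lin0[OF x0, where c = "2 * pochhammer \<beta> (R - J)"]) (simp add: algebra_simps)
  qed
qed


definition kapP :: "nat \<Rightarrow> nat \<Rightarrow> complex" where
  "kapP d r = (if even r then 2 else of_nat d - of_nat r)"
definition lamP :: "nat \<Rightarrow> nat \<Rightarrow> complex" where
  "lamP d j = (if odd j then 2 else of_nat d - of_nat j + 1)"

lemma NI2:
  "(Eth d \<beta> r - Eth d (- \<beta>) j) * Nn \<beta> r j - kapP d r * Nn \<beta> (Suc r) j
     + (if j = 0 then 0 else lamP d j * Nn \<beta> r (j - 1)) = 0"
proof (cases r rule: parity_cases)
  case (1 R)
  show ?thesis
  proof (cases j rule: parity_cases)
    case (1 J)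
    have a: "Nn \<beta> r j = of_nat (R choose J) * pochhammer \<beta> (R - J)" using 1 \<open>r = 2*R\<close> Nn_ee by simp
    have b: "Nn \<beta> (Suc r) j = of_nat (R choose J) * pochhammer \<beta> (Suc R - J)" using 1 \<open>r = 2*R\<close> Nn_oe by simp
    have c: "(if j = 0 then 0 else lamP d j * Nn \<beta> r (j - 1)) = 0" using 1 \<open>r = 2*R\<close> by (simp add: Nn_def)
    have th: "Eth d \<beta> r - Eth d (- \<beta>) j = 2 * \<beta> + 2 * of_nat R - 2 * of_nat J"
      using 1 \<open>r = 2*R\<close> by (simp add: Eth_def field_simps)
    have kp: "kapP d r = 2" using \<open>r = 2*R\<close> by (simp add: kapP_def)
    show ?thesis
    proof (cases "J \<le> R")
      case False
      then have z1: "R choose J = 0" by (simp add: binomial_eq_0)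
      show ?thesis unfolding a b c z1 by simp
    next
      case True
      show ?thesis unfolding a b c th kp poch_shift[OF True] by (simp add: algebra_simps)
    qed
  next
    case (2 J)
    have a: "Nn \<beta> r j = 0" using 2 \<open>r = 2*R\<close> Nn_eo by simp
    have b: "Nn \<beta> (Suc r) j = of_nat (R choose J) * pochhammer \<beta> (R - J)" using 2 \<open>r = 2*R\<close> Nn_oo by simp
    have c: "Nn \<beta> r (j - 1) = of_nat (R choose J) * pochhammer \<beta> (R - J)" using 2 \<open>r = 2*R\<close> Nn_ee by simp
    show ?thesis unfolding a b using c 2 \<open>r = 2*R\<close> by (simp add: kapP_def lamP_def)
  qed
next
  case (2 R)
  show ?thesis
  proof (cases j rule: parity_cases)
    case (1 J)
    have a: "Nn \<beta> r j = of_nat (R choose J) * pochhammer \<beta> (Suc R - J)" using 1 \<open>r = Suc (2*R)\<close> Nn_oe by simp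
    have b: "Nn \<beta> (Suc r) j = of_nat (Suc R choose J) * pochhammer \<beta> (Suc R - J)"
      using 1 \<open>r = Suc (2*R)\<close> Nn_ee[of \<beta> "Suc R" J] by simp
    have th: "Eth d \<beta> r - Eth d (- \<beta>) j = of_nat d - 2 * of_nat R - 1 - 2 * of_nat J"
      using 1 \<open>r = Suc (2*R)\<close> by (simp add: Eth_def field_simps)
    have kp: "kapP d r = of_nat d - 2 * of_nat R - 1" using \<open>r = Suc (2*R)\<close> by (simp add: kapP_def)
    show ?thesis
    proof (cases J)
      case 0
      then show ?thesis unfolding a b th kp using 1 by simp
    next
      case (Suc J')
      have c: "Nn \<beta> r (j - 1) = of_nat (R choose J') * pochhammer \<beta> (Suc R - J)"
        using 1 \<open>r = Suc (2*R)\<close> Suc Nn_oo[of \<beta> R J'] by simp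
      have lp: "lamP d j = of_nat d - 2 * of_nat J + 1" using 1 by (simp add: lamP_def)
      have x0: "of_nat (Suc J') * (of_nat (R choose Suc J') :: complex) - (of_nat R - of_nat J') * of_nat (R choose J') = 0"
      proof (cases "J' \<le> R")
        case True then show ?thesis using binom_key_c[of J' R] by (simp add: of_nat_diff)
      next
        case False
        then have z1: "R choose J' = 0" and z2: "R choose Suc J' = 0" by (simp_all add: binomial_eq_0)
        show ?thesis unfolding z1 z2 by simp
      qed
      show ?thesis unfolding a b c th kp lp using 1 Suc
        by (intro lin0[OF x0, where c = "- 2 * pochhammer \<beta> (Suc R - J)"]) (simp add: algebra_simps)
    qed
  next
    case (2 J)
    have a: "Nn \<beta> r j = of_nat (R choose J) * pochhammer \<beta> (R - J)" using 2 \<open>r = Suc (2*R)\<close> Nn_oo by simp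
    have b: "Nn \<beta> (Suc r) j = 0" using 2 \<open>r = Suc (2*R)\<close> Nn_eo[of \<beta> "Suc R" J] by simp
    have c: "Nn \<beta> r (j - 1) = of_nat (R choose J) * pochhammer \<beta> (Suc R - J)" using 2 \<open>r = Suc (2*R)\<close> Nn_oe by simp
    have th: "Eth d \<beta> r - Eth d (- \<beta>) j = - 2 * \<beta> - 2 * of_nat R + 2 * of_nat J"
      using 2 \<open>r = Suc (2*R)\<close> by (simp add: Eth_def field_simps)
    have lp: "lamP d j = 2" using 2 by (simp add: lamP_def)
    show ?thesis
    proof (cases "J \<le> R")
      case False
      then have z1: "R choose J = 0" by (simp add: binomial_eq_0)
      show ?thesis unfolding a b c z1 by simp
    next
      case True
      show ?thesis unfolding a b c th lp poch_shift[OF True] using 2 by (simp add: algebra_simps)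
    qed
  qed
qed

definition Amat :: "nat \<Rightarrow> complex \<Rightarrow> complex \<Rightarrow> complex \<Rightarrow> nat \<Rightarrow> complex" where
  "Amat d a \<beta> c r = (\<Prod>t\<in>{r..<d}. rhoP d a \<beta> c t)"
definition Bmat :: "nat \<Rightarrow> complex \<Rightarrow> complex \<Rightarrow> complex \<Rightarrow> nat \<Rightarrow> complex" where
  "Bmat d a \<beta> c j = (\<Prod>t\<in>{..<j}. rhoP d a (- \<beta>) c t)"
definition Psi :: "nat \<Rightarrow> complex \<Rightarrow> complex \<Rightarrow> complex \<Rightarrow> nat \<Rightarrow> nat \<Rightarrow> complex" where
  "Psi d a \<beta> c r j = Amat d a \<beta> c r * Bmat d a \<beta> c j * Nn \<beta> r j"

lemma A_rec: "r < d \<Longrightarrow> Amat d a \<beta> c r = rhoP d a \<beta> c r * Amat d a \<beta> c (Suc r)"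
  unfolding Amat_def by (simp add: prod.atLeast_Suc_lessThan)
lemma B_rec: "Bmat d a \<beta> c (Suc j) = Bmat d a \<beta> c j * rhoP d a (- \<beta>) c j"
  unfolding Bmat_def by simp

lemma Eph_even: "even i \<Longrightarrow> i \<le> d \<Longrightarrow> Eph d a b c i = of_nat i * (of_nat d - of_nat i + 1)"
proof -
  assume i: "even i" "i \<le> d"
  have "Eph d a b c i = of_nat i * of_nat (d - i + 1)" using i(1) unfolding Eph_def by (simp only: if_True of_nat_mult)
  also have "\<dots> = of_nat i * (of_nat d - of_nat i + 1)" using i(2) by (simp add: of_nat_diff)
  finally show ?thesis .
qed
lemma Eph_odd: "odd i \<Longrightarrow> Eph d a b c i = c ^ 2 - (2 * a + 2 * b - of_nat d + 2 * of_nat i - 1) ^ 2 / 4"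
  unfolding Eph_def by simp

lemma Eph_rho: "r < d \<Longrightarrow> Eph d a \<beta> c (Suc r) = - rhoP d a \<beta> c r * kapP d r"
proof (cases "even r")
  case True
  then show "r < d \<Longrightarrow> ?thesis" by (simp add: Eph_odd rhoP_def kapP_def field_simps power2_eq_square)
next
  case False
  assume "r < d"
  then have e: "d - Suc r + 1 = d - r" by simp
  have ev: "even (Suc r)" using False by simp
  show ?thesis using False \<open>r < d\<close> unfolding Eph_even[OF ev Suc_leI[OF \<open>r < d\<close>]] rhoP_def kapP_def
    by (simp add: of_nat_diff algebra_simps)
qed

lemma Eph_sig: "0 < t \<Longrightarrow> t \<le> d \<Longrightarrow> Eph d a (- \<beta>) c t = - rhoP d a (- \<beta>) c (t - 1) * lamP d t"
proof (cases "even t")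
  case True
  assume t: "0 < t" "t \<le> d"
  then have o: "odd (t - 1)" using True by simp
  have e: "of_nat (t - 1) + 1 = (of_nat t :: complex)" using t by (simp add: of_nat_diff)
  show ?thesis using True t o unfolding Eph_even[OF True t(2)] rhoP_def lamP_def
    by (simp add: e of_nat_diff algebra_simps)
next
  case False
  assume t: "0 < t" "t \<le> d"
  then have o: "even (t - 1)" using False by simp
  show ?thesis using False t o unfolding Eph_odd[OF False] rhoP_def lamP_def
    by (simp add: of_nat_diff field_simps power2_eq_square)
qed

lemma PsiX:
  assumes r: "r \<le> d" and t: "t \<le> d"
  shows "Eth d a r * Psi d a \<beta> c r t + (if r = 0 then 0 else Psi d a \<beta> c (r - 1) t)
       = Psi d a \<beta> c r t * Eth d a t + Psi d a \<beta> c r (Suc t)"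
proof -
  have N: "(Eth d a r - Eth d a t) * Nn \<beta> r t + (if r = 0 then 0 else rhoP d a \<beta> c (r - 1) * Nn \<beta> (r - 1) t)
     - rhoP d a (- \<beta>) c t * Nn \<beta> r (Suc t) = 0" by (rule NI1)
  have P1: "(if r = 0 then 0 else Psi d a \<beta> c (r - 1) t)
      = Amat d a \<beta> c r * Bmat d a \<beta> c t * (if r = 0 then 0 else rhoP d a \<beta> c (r - 1) * Nn \<beta> (r - 1) t)"
  proof (cases r)
    case (Suc m)
    then have "m < d" using r by simp
    then show ?thesis using Suc A_rec[of m d a \<beta> c] by (simp add: Psi_def)
  qed simp
  have P2: "Psi d a \<beta> c r (Suc t) = Amat d a \<beta> c r * Bmat d a \<beta> c t * (rhoP d a (- \<beta>) c t * Nn \<beta> r (Suc t))"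
    by (simp add: Psi_def B_rec)
  show ?thesis unfolding P1 P2
    by (rule lin_aux[OF N, where c = "Amat d a \<beta> c r * Bmat d a \<beta> c t"]) (simp add: Psi_def algebra_simps)
qed

lemma kapP_d: "odd d \<Longrightarrow> kapP d d = 0" by (simp add: kapP_def)

lemma PsiY:
  assumes d: "odd d" and r: "r \<le> d" and t: "t \<le> d"
  shows "Eth d \<beta> r * Psi d a \<beta> c r t + (if r < d then Eph d a \<beta> c (Suc r) * Psi d a \<beta> c (Suc r) t else 0)
       = Psi d a \<beta> c r t * Eth d (- \<beta>) t + (if t = 0 then 0 else Psi d a \<beta> c r (t - 1) * Eph d a (- \<beta>) c t)"
proof -
  have N: "(Eth d \<beta> r - Eth d (- \<beta>) t) * Nn \<beta> r t - kapP d r * Nn \<beta> (Suc r) t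
     + (if t = 0 then 0 else lamP d t * Nn \<beta> r (t - 1)) = 0" by (rule NI2)
  have P1: "(if r < d then Eph d a \<beta> c (Suc r) * Psi d a \<beta> c (Suc r) t else 0)
      = Amat d a \<beta> c r * Bmat d a \<beta> c t * (- kapP d r * Nn \<beta> (Suc r) t)"
  proof (cases "r < d")
    case True
    then show ?thesis using A_rec[OF True, of a \<beta> c] Eph_rho[OF True, of a \<beta> c] by (simp add: Psi_def algebra_simps)
  next
    case False
    then have "r = d" using r by simp
    then show ?thesis using kapP_d[OF d] by simp
  qed
  have P2: "(if t = 0 then 0 else Psi d a \<beta> c r (t - 1) * Eph d a (- \<beta>) c t)
      = Amat d a \<beta> c r * Bmat d a \<beta> c t * (- (if t = 0 then 0 else lamP d t * Nn \<beta> r (t - 1)))"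
  proof (cases t)
    case (Suc m)
    then show ?thesis using Eph_sig[of t d a \<beta> c] t B_rec[of d a \<beta> c m] by (simp add: Psi_def algebra_simps)
  qed simp
  show ?thesis unfolding P1 P2
    by (rule lin_aux[OF N, where c = "Amat d a \<beta> c r * Bmat d a \<beta> c t"]) (simp add: Psi_def algebra_simps)
qed

lemma matact_comp: "matact d M (matact d N v) = matact d (\<lambda>r j. \<Sum>s\<le>d. M r s * N s j) v"
proof
  fix r
  show "matact d M (matact d N v) r = matact d (\<lambda>r j. \<Sum>s\<le>d. M r s * N s j) v r"
  proof (cases "r \<le> d")
    case True
    have "(\<Sum>s\<le>d. M r s * matact d N v s) = (\<Sum>s\<le>d. M r s * (\<Sum>j\<le>d. N s j * v j))"
      by (rule sum.cong) (auto simp: matact_def)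
    also have "\<dots> = (\<Sum>s\<le>d. \<Sum>j\<le>d. M r s * N s j * v j)"
      by (simp add: sum_distrib_left mult.assoc)
    also have "\<dots> = (\<Sum>j\<le>d. \<Sum>s\<le>d. M r s * N s j * v j)"
      by (rule sum.swap)
    also have "\<dots> = (\<Sum>j\<le>d. (\<Sum>s\<le>d. M r s * N s j) * v j)"
      by (simp add: sum_distrib_right)
    finally show ?thesis using True by (simp add: matact_def)
  qed (simp add: matact_def)
qed

lemma matact_cong: "(\<And>r j. r \<le> d \<Longrightarrow> j \<le> d \<Longrightarrow> M r j = M' r j) \<Longrightarrow> matact d M v = matact d M' v"
  unfolding matact_def by (intro ext) (auto intro!: sum.cong)

lemma rowX: "r \<le> d \<Longrightarrow> (\<Sum>s\<le>d. EXm d a r s * M s t) = Eth d a r * M r t + (if r = 0 then 0 else M (r - 1) t)"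
  using matact_X[of r d a "\<lambda>s. M s t"] by (simp add: matact_def)

lemma rowY: "r \<le> d \<Longrightarrow> (\<Sum>s\<le>d. EYm d a b c r s * M s t) = Eth d b r * M r t + (if r < d then Eph d a b c (Suc r) * M (Suc r) t else 0)"
  using matact_Y[of r d a b c "\<lambda>s. M s t"] by (simp add: matact_def)

lemma colX:
  assumes "t \<le> d"
  shows "(\<Sum>s\<le>d. M r s * EXm d a s t) = M r t * Eth d a t + (if t < d then M r (Suc t) else 0)"
proof -
  have "(\<Sum>s\<le>d. M r s * EXm d a s t) = (\<Sum>s\<le>d. (if s = t then M r s * Eth d a t else 0) + (if s = Suc t then M r s else 0))"
    by (rule sum.cong) (auto simp: EXm_def)
  also have "\<dots> = M r t * Eth d a t + (if t < d then M r (Suc t) else 0)"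
    using assms by (simp add: sum.distrib sum.delta)
  finally show ?thesis .
qed

lemma colY:
  assumes "t \<le> d"
  shows "(\<Sum>s\<le>d. M r s * EYm d a b c s t) = M r t * Eth d b t + (if t = 0 then 0 else M r (t - 1) * Eph d a b c t)"
proof -
  have "(\<Sum>s\<le>d. M r s * EYm d a b c s t) = (\<Sum>s\<le>d. (if s = t then M r s * Eth d b t else 0) + (if s = t - 1 \<and> t \<noteq> 0 then M r s * Eph d a b c t else 0))"
    by (rule sum.cong) (auto simp: EYm_def)
  also have "\<dots> = M r t * Eth d b t + (if t = 0 then 0 else M r (t - 1) * Eph d a b c t)"
    using assms by (auto simp add: sum.distrib sum.delta)
  finally show ?thesis .
qed

lemma Psi_big: "r < j \<Longrightarrow> Psi d a \<beta> c r j = 0"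
  by (simp add: Psi_def Nn_big)

lemma PhiX: "matact d (Psi d a \<beta> c) (matact d (EXm d a) v) = matact d (EXm d a) (matact d (Psi d a \<beta> c) v)"
  unfolding matact_comp
proof (rule matact_cong)
  fix r j assume r: "r \<le> d" and j: "j \<le> d"
  have z: "\<not> j < d \<Longrightarrow> Psi d a \<beta> c r (Suc j) = 0" using r j by (intro Psi_big) simp
  show "(\<Sum>s\<le>d. Psi d a \<beta> c r s * EXm d a s j) = (\<Sum>s\<le>d. EXm d a r s * Psi d a \<beta> c s j)"
    unfolding colX[OF j] rowX[OF r] PsiX[OF r j] using z by (cases "j < d") simp_all
qed

lemma PhiY: assumes d: "odd d"
  shows "matact d (Psi d a \<beta> c) (matact d (EYm d a (- \<beta>) c) v) = matact d (EYm d a \<beta> c) (matact d (Psi d a \<beta> c) v)"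
  unfolding matact_comp
proof (rule matact_cong)
  fix r j assume r: "r \<le> d" and j: "j \<le> d"
  show "(\<Sum>s\<le>d. Psi d a \<beta> c r s * EYm d a (- \<beta>) c s j) = (\<Sum>s\<le>d. EYm d a \<beta> c r s * Psi d a \<beta> c s j)"
    unfolding colY[OF j] rowY[OF r] using PsiY[OF d r j] by simp
qed

lemma matact_lin: "matact d M (\<lambda>r. f r + g r - k * v r) = (\<lambda>r. matact d M f r + matact d M g r - k * matact d M v r)"
  unfolding matact_def by (intro ext) (simp add: sum.distrib sum_subtractf sum_distrib_left algebra_simps)

lemma PhiZ: assumes d: "odd d"
  shows "matact d (Psi d a \<beta> c) (Eact d a (- \<beta>) c GZ v) = Eact d a \<beta> c GZ (matact d (Psi d a \<beta> c) v)"
proof -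
  have "matact d (Psi d a \<beta> c) (Eact d a (- \<beta>) c GZ v)
     = (\<lambda>r. matact d (Psi d a \<beta> c) (matact d (EXm d a) (matact d (EYm d a (- \<beta>) c) v)) r
          + matact d (Psi d a \<beta> c) (matact d (EYm d a (- \<beta>) c) (matact d (EXm d a) v)) r
          - (c ^ 2 - a ^ 2 - (- \<beta>) ^ 2 + (of_nat d + 1) ^ 2 / 4) * matact d (Psi d a \<beta> c) v r)"
    unfolding Eact_def BIgen.case by (rule matact_lin)
  also have "\<dots> = Eact d a \<beta> c GZ (matact d (Psi d a \<beta> c) v)"
    unfolding Eact_def BIgen.case PhiX PhiY[OF d] by simp
  finally show ?thesis .
qed

lemma matact_upd:
  assumes "m \<le> d" "r \<le> d"
  shows "matact d M (u(m := x)) r = matact d M u r + M r m * (x - u m)"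
proof -
  have "(\<Sum>s\<le>d. M r s * (u(m := x)) s) = (\<Sum>s\<le>d. M r s * u s + (if s = m then M r m * (x - u m) else 0))"
    by (rule sum.cong) (auto simp: algebra_simps)
  then show ?thesis using assms by (simp add: matact_def sum.distrib)
qed

lemma tri_zero:
  assumes diag: "\<forall>r\<le>d. M r r \<noteq> 0" and low: "\<forall>r j. r < j \<longrightarrow> M r j = 0"
    and u: "u \<in> Ecar d" and z: "\<forall>r\<le>d. matact d M u r = 0"
  shows "u = (\<lambda>_. 0)"
proof -
  have "\<forall>s<r. u s = 0" for r
  proof (induction r)
    case 0 then show ?case by simp
  next
    case (Suc r)
    have "u r = 0"
    proof (cases "r \<le> d")
      case False then show ?thesis using u by (simp add: Ecar_def)
    next
      case True
      have "(\<Sum>s\<le>d. M r s * u s) = (\<Sum>s\<le>d. if s = r then M r r * u r else 0)"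
      proof (rule sum.cong)
        fix s assume "s \<in> {..d}"
        show "M r s * u s = (if s = r then M r r * u r else 0)"
          using Suc.IH low by (cases "s < r"; cases "r < s") auto
      qed simp
      then have "M r r * u r = 0" using z True by (simp add: matact_def)
      then show ?thesis using diag True by simp
    qed
    then show ?case using Suc.IH less_Suc_eq by auto
  qed
  then show ?thesis by (intro ext) auto
qed

lemma matact_diff: "matact d M (\<lambda>r. u r - w r) r = matact d M u r - matact d M w r"
  by (simp add: matact_def sum_subtractf algebra_simps)

lemma tri_inj:
  assumes diag: "\<forall>r\<le>d. M r r \<noteq> 0" and low: "\<forall>r j. r < j \<longrightarrow> M r j = 0"
  shows "inj_on (matact d M) (Ecar d)"
proof (rule inj_onI)
  fix u w assume u: "u \<in> Ecar d" and w: "w \<in> Ecar d" and e: "matact d M u = matact d M w"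
  have "(\<lambda>r. u r - w r) \<in> Ecar d" using u w by (simp add: Ecar_def)
  moreover have "\<forall>r\<le>d. matact d M (\<lambda>r. u r - w r) r = 0" using e by (simp add: matact_diff)
  ultimately have "(\<lambda>r. u r - w r) = (\<lambda>_. 0)" using tri_zero[OF diag low] by blast
  then show "u = w" by (metis (no_types, lifting) eq_iff_diff_eq_0 ext)
qed

lemma tri_surj:
  assumes diag: "\<forall>r\<le>d. M r r \<noteq> 0" and low: "\<forall>r j. r < j \<longrightarrow> M r j = 0"
    and w: "w \<in> Ecar d"
  shows "\<exists>u\<in>Ecar d. matact d M u = w"
proof -
  have "m \<le> Suc d \<Longrightarrow> \<exists>u\<in>Ecar d. \<forall>r<m. matact d M u r = w r" for m
  proof (induction m)
    case 0 then show ?case by (auto simp: Ecar_def)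
  next
    case (Suc m)
    then obtain u where u: "u \<in> Ecar d" and h: "\<forall>r<m. matact d M u r = w r" by auto
    have md: "m \<le> d" using Suc.prems by simp
    define u' where "u' = u(m := u m + (w m - matact d M u m) / M m m)"
    have u': "u' \<in> Ecar d" using u md by (simp add: Ecar_def u'_def)
    have "\<forall>r<Suc m. matact d M u' r = w r"
    proof (intro allI impI)
      fix r assume r: "r < Suc m"
      then have rd: "r \<le> d" using md by simp
      show "matact d M u' r = w r"
      proof (cases "r = m")
        case True
        then show ?thesis unfolding u'_def matact_upd[OF md rd] using diag md by simp
      next
        case False
        then have "r < m" using r by simp
        then show ?thesis unfolding u'_def matact_upd[OF md rd] using h low by simp
      qed
    qed
    then show ?case using u' by blast
  qed
  then obtain u where u: "u \<in> Ecar d" and h: "\<forall>r<Suc d. matact d M u r = w r" by blast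
  have "matact d M u = w"
  proof
    fix r show "matact d M u r = w r"
      using h w by (cases "r \<le> d") (auto simp: matact_def Ecar_def)
  qed
  then show ?thesis using u by blast
qed

lemma matact_Ecar: "matact d M u \<in> Ecar d"
  by (simp add: matact_def Ecar_def)

lemma tri_bij:
  assumes diag: "\<forall>r\<le>d. M r r \<noteq> 0" and low: "\<forall>r j. r < j \<longrightarrow> M r j = 0"
  shows "bij_betw (matact d M) (Ecar d) (Ecar d)"
  unfolding bij_betw_def using tri_inj[OF diag low] tri_surj[OF diag low] matact_Ecar by blast

locale Smod =
  fixes d :: nat and a b c :: complex and S :: "(nat \<Rightarrow> complex) set"
  assumes sub: "S \<subseteq> Ecar d"
    and add: "\<And>u v. u \<in> S \<Longrightarrow> v \<in> S \<Longrightarrow> (\<lambda>x. u x + v x) \<in> S"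
    and smul: "\<And>k u. u \<in> S \<Longrightarrow> (\<lambda>x. k * u x) \<in> S"
    and actX: "\<And>u. u \<in> S \<Longrightarrow> matact d (EXm d a) u \<in> S"
    and actY: "\<And>u. u \<in> S \<Longrightarrow> matact d (EYm d a b c) u \<in> S"
begin

lemma lc: "u \<in> S \<Longrightarrow> v \<in> S \<Longrightarrow> (\<lambda>x. u x + k * v x) \<in> S"
  using add smul by blast

lemma zero_out: "u \<in> S \<Longrightarrow> d < r \<Longrightarrow> u r = 0"
  using sub by (auto simp: Ecar_def)

abbreviation Yop where "Yop \<equiv> matact d (EYm d a b c)"

lemma Y_lin: "Yop (\<lambda>x. u x + k * v x) r = Yop u r + k * Yop v r"
  by (simp add: matact_def sum.distrib sum_distrib_left algebra_simps)

lemma eig_top: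
  assumes dist: "\<forall>i\<le>d. \<forall>j\<le>d. i \<noteq> j \<longrightarrow> Eth d b i \<noteq> Eth d b j" and l: "l \<le> d"
  shows "u \<in> S \<Longrightarrow> u l \<noteq> 0 \<Longrightarrow> \<forall>r>l. u r = 0 \<Longrightarrow> \<forall>r\<ge>m. Yop u r - Eth d b l * u r = 0
    \<Longrightarrow> \<exists>w\<in>S. w l \<noteq> 0 \<and> (\<forall>r>l. w r = 0) \<and> (\<forall>r. Yop w r = Eth d b l * w r)"
proof (induction m arbitrary: u)
  case 0
  then show ?case by auto
next
  case (Suc m)
  define v where "v = (\<lambda>x. Yop u x + (- Eth d b l) * u x)"
  have vS: "v \<in> S" unfolding v_def by (rule lc[OF actY[OF Suc.prems(1)] Suc.prems(1)])
  have vl: "\<forall>r\<ge>l. v r = 0"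
  proof (intro allI impI)
    fix r assume r: "l \<le> r"
    show "v r = 0"
    proof (cases "r \<le> d")
      case True
      have "Yop u r = Eth d b r * u r + (if r < d then Eph d a b c (Suc r) * u (Suc r) else 0)"
        by (rule matact_Y[OF True])
      then show ?thesis using r Suc.prems(3) unfolding v_def by (cases "r = l") auto
    next
      case False
      then show ?thesis unfolding v_def using zero_out[OF Suc.prems(1)] by (simp add: matact_def)
    qed
  qed
  have vm: "\<forall>r\<ge>Suc m. v r = 0" using Suc.prems(4) unfolding v_def by simp
  show ?case
  proof (cases "v m = 0")
    case True
    have "\<forall>r\<ge>m. v r = 0"
    proof (intro allI impI)
      fix r assume "m \<le> r"
      then show "v r = 0" using True vm by (cases "r = m") auto
    qed
    then have "\<forall>r\<ge>m. Yop u r - Eth d b l * u r = 0"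
      unfolding v_def by simp
    then show ?thesis by (rule Suc.IH[OF Suc.prems(1-3)])
  next
    case False
    have ml: "m < l"
    proof (rule ccontr)
      assume "\<not> m < l" then have "l \<le> m" by simp
      then show False using vl False by simp
    qed
    then have md: "m \<le> d" using l by simp
    have ne: "Eth d b m - Eth d b l \<noteq> 0" using dist ml l md by auto
    define k where "k = - 1 / (Eth d b m - Eth d b l)"
    define u' where "u' = (\<lambda>x. u x + k * v x)"
    have u'S: "u' \<in> S" unfolding u'_def by (rule lc[OF Suc.prems(1) vS])
    have u'l: "u' l = u l" using vl by (simp add: u'_def)
    have u'g: "\<forall>r>l. u' r = 0" using vl Suc.prems(3) by (simp add: u'_def)
    have res: "\<forall>r\<ge>m. Yop u' r - Eth d b l * u' r = 0"
    proof (intro allI impI)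
      fix r assume r: "m \<le> r"
      have e1: "Yop u' r - Eth d b l * u' r = v r + k * (Yop v r - Eth d b l * v r)"
        unfolding u'_def Y_lin v_def by (simp add: algebra_simps)
      show "Yop u' r - Eth d b l * u' r = 0"
      proof (cases "r = m")
        case True
        have "Yop v m = Eth d b m * v m + (if m < d then Eph d a b c (Suc m) * v (Suc m) else 0)"
          by (rule matact_Y[OF md])
        then have "Yop v m = Eth d b m * v m" using vm by simp
        then show ?thesis unfolding e1 using True ne by (simp add: k_def field_simps)
      next
        case False
        then have r': "Suc m \<le> r" using r by simp
        have "Yop v r = 0"
        proof (cases "r \<le> d")
          case True
          have "Yop v r = Eth d b r * v r + (if r < d then Eph d a b c (Suc r) * v (Suc r) else 0)"
            by (rule matact_Y[OF True])
          then show ?thesis using vm r' by simp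
        qed (simp add: matact_def)
        then show ?thesis unfolding e1 using vm r' by simp
      qed
    qed
    have u'l0: "u' l \<noteq> 0" using u'l Suc.prems(2) by simp
    show ?thesis by (rule Suc.IH[OF u'S u'l0 u'g res])
  qed
qed

lemma eig_from_top:
  assumes dist: "\<forall>i\<le>d. \<forall>j\<le>d. i \<noteq> j \<longrightarrow> Eth d b i \<noteq> Eth d b j" and l: "l \<le> d"
    and u: "u \<in> S" "u l \<noteq> 0" "\<forall>r>l. u r = 0"
  shows "\<exists>w\<in>S. w l \<noteq> 0 \<and> (\<forall>r>l. w r = 0) \<and> (\<forall>r. Yop w r = Eth d b l * w r)"
proof (rule eig_top[OF dist l u, of "Suc d"], intro allI impI)
  fix r assume "Suc d \<le> r"
  then show "Yop u r - Eth d b l * u r = 0" using zero_out[OF u(1)] by (simp add: matact_def)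
qed

lemma raise:
  assumes w: "w \<in> S" "w k \<noteq> 0" "\<forall>r>k. w r = 0" and k: "k < d"
  shows "matact d (EXm d a) w \<in> S \<and> matact d (EXm d a) w (Suc k) \<noteq> 0 \<and> (\<forall>r>Suc k. matact d (EXm d a) w r = 0)"
proof (intro conjI allI impI)
  show "matact d (EXm d a) w \<in> S" by (rule actX[OF w(1)])
  have "matact d (EXm d a) w (Suc k) = Eth d a (Suc k) * w (Suc k) + w k"
    using matact_X[of "Suc k" d a w] k by simp
  then show "matact d (EXm d a) w (Suc k) \<noteq> 0" using w by simp
next
  fix r assume r: "Suc k < r"
  show "matact d (EXm d a) w r = 0"
  proof (cases "r \<le> d")
    case True
    then show ?thesis using matact_X[OF True, of a w] w(3) r by (cases r) auto
  qed (simp add: matact_def)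
qed

lemma top_d:
  assumes dist: "\<forall>i\<le>d. \<forall>j\<le>d. i \<noteq> j \<longrightarrow> Eth d b i \<noteq> Eth d b j"
    and u: "u \<in> S" "u \<noteq> (\<lambda>_. 0)"
  shows "\<exists>w\<in>S. w d \<noteq> 0 \<and> (\<forall>r. Yop w r = Eth d b d * w r)"
proof -
  obtain r0 where r0: "u r0 \<noteq> 0" using u(2) by auto
  have bnd: "\<forall>y. u y \<noteq> 0 \<longrightarrow> y \<le> d" using zero_out[OF u(1)] by (meson not_le)
  obtain l where l: "u l \<noteq> 0" "\<forall>y. u y \<noteq> 0 \<longrightarrow> y \<le> l"
  proof -
    have b2: "\<forall>y. u y \<noteq> 0 \<longrightarrow> (\<lambda>y. y) y < Suc d" using bnd by auto
    show ?thesis using ex_has_greatest_nat[of "\<lambda>y. u y \<noteq> 0" r0 "\<lambda>y. y" "Suc d", OF r0 b2] that by blast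
  qed
  have ld: "l \<le> d" using bnd l by blast
  have lg: "\<forall>r>l. u r = 0" using l(2) by (meson not_le)
  have "\<forall>k. l \<le> k \<longrightarrow> k \<le> d \<longrightarrow> (\<exists>w\<in>S. w k \<noteq> 0 \<and> (\<forall>r>k. w r = 0) \<and> (\<forall>r. Yop w r = Eth d b k * w r))"
  proof (intro allI)
    fix k show "l \<le> k \<longrightarrow> k \<le> d \<longrightarrow> (\<exists>w\<in>S. w k \<noteq> 0 \<and> (\<forall>r>k. w r = 0) \<and> (\<forall>r. Yop w r = Eth d b k * w r))"
    proof (induction k)
      case 0
      then show ?case using eig_from_top[OF dist _ u(1) l(1) lg] by auto
    next
      case (Suc k)
      show ?case
      proof (intro impI)
        assume a1: "l \<le> Suc k" and a2: "Suc k \<le> d"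
        show "\<exists>w\<in>S. w (Suc k) \<noteq> 0 \<and> (\<forall>r>Suc k. w r = 0) \<and> (\<forall>r. Yop w r = Eth d b (Suc k) * w r)"
        proof (cases "l = Suc k")
          case True
          then show ?thesis using eig_from_top[OF dist a2 u(1)] l(1) lg by auto
        next
          case False
          then have "l \<le> k" using a1 by simp
          then obtain w where w: "w \<in> S" "w k \<noteq> 0" "\<forall>r>k. w r = 0" using Suc.IH a2 by auto
          have kd: "k < d" using a2 by simp
          have X: "matact d (EXm d a) w \<in> S" "matact d (EXm d a) w (Suc k) \<noteq> 0" "\<forall>r>Suc k. matact d (EXm d a) w r = 0"
            using raise[OF w kd] by auto
          show ?thesis by (rule eig_from_top[OF dist a2 X])
        qed
      qed
    qed
  qed
  then obtain w where "w \<in> S" "w d \<noteq> 0" "\<forall>r. Yop w r = Eth d b d * w r" using ld by blast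
  then show ?thesis by blast
qed

end

lemma eig0:
  assumes v: "v \<in> Ecar d" and dist: "\<forall>r. 0 < r \<longrightarrow> r \<le> d \<longrightarrow> Eth d b r \<noteq> Eth d b 0"
    and e: "\<forall>r. matact d (EYm d a b c) v r = Eth d b 0 * v r"
  shows "\<forall>r>0. v r = 0"
proof -
  have "\<forall>r. d - k \<le> r \<longrightarrow> 0 < r \<longrightarrow> v r = 0" for k
  proof (induction k)
    case 0
    show ?case
    proof (intro allI impI)
      fix r assume r: "d - 0 \<le> r" "0 < r"
      show "v r = 0"
      proof (cases "r = d")
        case True
        have h0: "matact d (EYm d a b c) v d = Eth d b d * v d" using matact_Y[of d d a b c v] by simp
        have h1: "Eth d b d * v d = Eth d b 0 * v d" using e[rule_format, of d] unfolding h0 .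
        then have h2: "(Eth d b d - Eth d b 0) * v d = 0" by (simp add: algebra_simps)
        have h3: "Eth d b d - Eth d b 0 \<noteq> 0" using dist r True by auto
        show ?thesis using h2 h3 True by simp
      next
        case False
        then show ?thesis using v r by (simp add: Ecar_def)
      qed
    qed
  next
    case (Suc k)
    show ?case
    proof (intro allI impI)
      fix r assume r: "d - Suc k \<le> r" "0 < r"
      show "v r = 0"
      proof (cases "d - k \<le> r")
        case True then show ?thesis using Suc.IH r by blast
      next
        case False
        then have rd: "r < d" "r = d - Suc k" using r by auto
        have "v (Suc r) = 0" using Suc.IH rd by simp
        then have h0: "matact d (EYm d a b c) v r = Eth d b r * v r" using matact_Y[of r d a b c v] rd by simp
        have h1: "Eth d b r * v r = Eth d b 0 * v r" using e[rule_format, of r] unfolding h0 .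
        then have h2: "(Eth d b r - Eth d b 0) * v r = 0" by (simp add: algebra_simps)
        have h3: "Eth d b r - Eth d b 0 \<noteq> 0" using dist rd r by auto
        show ?thesis using h2 h3 by simp
      qed
    qed
  qed
  then show ?thesis by (metis diff_self_eq_0 le0)
qed

lemma irred_generic:
  assumes d: "odd d"
    and dist: "\<forall>i\<le>d. \<forall>j\<le>d. i \<noteq> j \<longrightarrow> Eth d b i \<noteq> Eth d b j"
    and dist': "\<forall>r. 0 < r \<longrightarrow> r \<le> d \<longrightarrow> Eth d b' r \<noteq> Eth d b' 0"
    and eq: "Eth d b d = Eth d b' 0"
    and inj: "inj_on \<Phi> (Ecar d)" and into: "\<And>u. \<Phi> u \<in> Ecar d"
    and linA: "\<And>u v. \<Phi> (\<lambda>x. u x + v x) = (\<lambda>y. \<Phi> u y + \<Phi> v y)"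
    and linS: "\<And>k u. \<Phi> (\<lambda>x. k * u x) = (\<lambda>y. k * \<Phi> u y)"
    and hX: "\<And>u. u \<in> Ecar d \<Longrightarrow> \<Phi> (matact d (EXm d a) u) = matact d (EXm d a) (\<Phi> u)"
    and hY: "\<And>u. u \<in> Ecar d \<Longrightarrow> \<Phi> (matact d (EYm d a b c) u) = matact d (EYm d a b' c) (\<Phi> u)"
  shows "bi_irreducible (Ecar d) (Eact d a b c)"
  unfolding bi_irreducible_def
proof (intro conjI allI impI)
  let ?e = "\<lambda>i r. if r = i then (1::complex) else 0"
  have e0: "?e 0 \<in> Ecar d" by (simp add: Ecar_def)
  show "Ecar d \<noteq> {\<lambda>_. 0}"
  proof
    assume h: "Ecar d = {\<lambda>_. 0}"
    have m: "(\<lambda>r::nat. if r = 0 then (1::complex) else 0) \<in> Ecar d" by (simp add: Ecar_def)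
    have ne: "(\<lambda>r::nat. if r = 0 then (1::complex) else 0) \<noteq> (\<lambda>_. 0)"
    proof
      assume "(\<lambda>r::nat. if r = 0 then (1::complex) else 0) = (\<lambda>_. 0)"
      then have "(\<lambda>r::nat. if r = 0 then (1::complex) else 0) 0 = 0" by (rule fun_cong)
      then show False by simp
    qed
    show False using m ne h by blast
  qed
  fix S
  assume H: "S \<subseteq> Ecar d \<and> (\<lambda>_. 0) \<in> S \<and> (\<forall>u\<in>S. \<forall>v\<in>S. (\<lambda>x. u x + v x) \<in> S) \<and> (\<forall>c. \<forall>u\<in>S. (\<lambda>x. c * u x) \<in> S)
     \<and> (\<forall>g. \<forall>u\<in>S. Eact d a b c g u \<in> S)"
  then have sub: "S \<subseteq> Ecar d" and z: "(\<lambda>_. 0) \<in> S" and ad: "\<And>u v. u \<in> S \<Longrightarrow> v \<in> S \<Longrightarrow> (\<lambda>x. u x + v x) \<in> S"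
    and sm: "\<And>k u. u \<in> S \<Longrightarrow> (\<lambda>x. k * u x) \<in> S" and ac: "\<And>g u. u \<in> S \<Longrightarrow> Eact d a b c g u \<in> S"
    by auto
  interpret Smod d a b c S
    by unfold_locales (use sub ad sm ac[of _ GX] ac[of _ GY] in \<open>auto simp: Eact_def\<close>)
  show "S = {\<lambda>_. 0} \<or> S = Ecar d"
  proof (cases "S = {\<lambda>_. 0}")
    case True then show ?thesis by simp
  next
    case False
    then obtain u where u: "u \<in> S" "u \<noteq> (\<lambda>_. 0)" using z by blast
    obtain w where w: "w \<in> S" "w d \<noteq> 0" "\<forall>r. matact d (EYm d a b c) w r = Eth d b d * w r"
      using top_d[OF dist u] by blast
    have wE: "w \<in> Ecar d" using w sub by blast
    have Phi0: "\<Phi> (\<lambda>_. 0) = (\<lambda>_. 0)" using linS[of 0 w] by simp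
    define v where "v = \<Phi> w"
    have vE: "v \<in> Ecar d" unfolding v_def by (rule into)
    have Yw: "matact d (EYm d a b c) w = (\<lambda>x. Eth d b d * w x)" using w(3) by auto
    have ev0: "matact d (EYm d a b' c) v = (\<lambda>y. Eth d b' 0 * v y)"
      using hY[OF wE] linS[of "Eth d b d" w] unfolding Yw v_def eq by simp
    have ev: "\<forall>r. matact d (EYm d a b' c) v r = Eth d b' 0 * v r" unfolding ev0 by simp
    have vz: "\<forall>r>0. v r = 0" by (rule eig0[OF vE dist' ev])
    have v0: "v 0 \<noteq> 0"
    proof
      assume "v 0 = 0"
      then have "v = (\<lambda>_. 0)" using vz by (auto intro!: ext) (metis gr0I)
      then have "\<Phi> w = \<Phi> (\<lambda>_. 0)" using Phi0 v_def by simp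
      then have "w = (\<lambda>_. 0)" using inj wE by (auto dest: inj_onD simp: Ecar_def)
      then show False using w(2) by simp
    qed
    define T where "T = \<Phi> ` S"
    have Tadd: "p \<in> T \<Longrightarrow> q \<in> T \<Longrightarrow> (\<lambda>x. p x + q x) \<in> T" for p q
    proof -
      assume "p \<in> T" "q \<in> T"
      then obtain s1 s2 where s: "s1 \<in> S" "s2 \<in> S" "p = \<Phi> s1" "q = \<Phi> s2" unfolding T_def by auto
      have "(\<lambda>x. p x + q x) = \<Phi> (\<lambda>x. s1 x + s2 x)" using s linA by simp
      then show ?thesis unfolding T_def using ad[OF s(1,2)] by blast
    qed
    have Tsm: "p \<in> T \<Longrightarrow> (\<lambda>x. k * p x) \<in> T" for p k
    proof -
      assume "p \<in> T"
      then obtain s1 where s: "s1 \<in> S" "p = \<Phi> s1" unfolding T_def by auto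
      have "(\<lambda>x. k * p x) = \<Phi> (\<lambda>x. k * s1 x)" using s linS by simp
      then show ?thesis unfolding T_def using sm[OF s(1)] by blast
    qed
    have TX: "p \<in> T \<Longrightarrow> matact d (EXm d a) p \<in> T" for p
    proof -
      assume "p \<in> T"
      then obtain s1 where s: "s1 \<in> S" "p = \<Phi> s1" unfolding T_def by auto
      have "matact d (EXm d a) p = \<Phi> (matact d (EXm d a) s1)" using s hX sub by auto
      then show ?thesis unfolding T_def using actX[OF s(1)] by blast
    qed
    have Tz: "(\<lambda>_. 0) \<in> T" unfolding T_def using z Phi0 by force
    have Te0: "?e 0 \<in> T"
    proof -
      have "(\<lambda>x. (1 / v 0) * v x) \<in> T" unfolding T_def v_def by (rule Tsm[unfolded T_def], use w in blast)
      moreover have "(\<lambda>x. (1 / v 0) * v x) = ?e 0" using v0 vz by (auto intro!: ext)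
      ultimately show ?thesis by simp
    qed
    have Te: "i \<le> d \<Longrightarrow> ?e i \<in> T" for i
    proof (induction i)
      case 0 then show ?case using Te0 by simp
    next
      case (Suc i)
      have x: "matact d (EXm d a) (?e i) \<in> T" using TX Suc by simp
      have "(\<lambda>x. matact d (EXm d a) (?e i) x + (- Eth d a i) * ?e i x) \<in> T"
        by (rule Tadd[OF x Tsm]) (use Suc in simp)
      moreover have "(\<lambda>x. matact d (EXm d a) (?e i) x + (- Eth d a i) * ?e i x) = ?e (Suc i)"
      proof
        fix r show "matact d (EXm d a) (?e i) r + (- Eth d a i) * ?e i r = ?e (Suc i) r"
        proof (cases "r \<le> d")
          case True then show ?thesis using matact_X[OF True, of a "?e i"] by (cases r) auto
        next
          case False then show ?thesis using Suc.prems by (simp add: matact_def)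
        qed
      qed
      ultimately show ?case by simp
    qed
    have allT: "\<forall>u. u \<in> Ecar d \<longrightarrow> (\<forall>r\<ge>m. u r = 0) \<longrightarrow> u \<in> T" for m
    proof (induction m)
      case 0
      show ?case
      proof (intro allI impI)
        fix u :: "nat \<Rightarrow> complex" assume "\<forall>r\<ge>0. u r = 0"
        then have "u = (\<lambda>_. 0)" by (intro ext) simp
        then show "u \<in> T" using Tz by simp
      qed
    next
      case (Suc m)
      show ?case
      proof (intro allI impI)
        fix u :: "nat \<Rightarrow> complex" assume uE: "u \<in> Ecar d" and us: "\<forall>r\<ge>Suc m. u r = 0"
        define u' where "u' = u(m := 0)"
        have u'E: "u' \<in> Ecar d" using uE by (simp add: u'_def Ecar_def)
        have u's: "\<forall>r\<ge>m. u' r = 0"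
        proof (intro allI impI)
          fix r assume "m \<le> r"
          then show "u' r = 0" using us by (cases "r = m") (auto simp: u'_def)
        qed
        have u'T: "u' \<in> T" using Suc.IH u'E u's by blast
        show "u \<in> T"
        proof (cases "m \<le> d")
          case True
          have "(\<lambda>x. u' x + u m * ?e m x) \<in> T" by (rule Tadd[OF u'T Tsm[OF Te[OF True]]])
          moreover have "(\<lambda>x. u' x + u m * ?e m x) = u" by (auto simp: u'_def)
          ultimately show ?thesis by simp
        next
          case False
          then have "u m = 0" using uE by (simp add: Ecar_def)
          then have "u' = u" by (auto simp: u'_def)
          then show ?thesis using u'T by simp
        qed
      qed
    qed
    have "Ecar d \<subseteq> S"
    proof
      fix x assume xE: "x \<in> Ecar d"
      have "\<Phi> x \<in> T" using allT[of "Suc d"] into[of x] by (auto simp: Ecar_def)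
      then obtain s where s: "s \<in> S" "\<Phi> s = \<Phi> x" unfolding T_def by auto
      then have "s = x" using inj xE sub by (auto dest: inj_onD)
      then show "x \<in> S" using s by simp
    qed
    then show ?thesis using sub by blast
  qed
qed

lemma sq_diff_nz: "(x::real) - y \<noteq> 0 \<Longrightarrow> x + y \<noteq> 0 \<Longrightarrow> ((complex_of_real x)^2 - (complex_of_real y)^2) / 2 \<noteq> 0"
proof
  assume h: "x - y \<noteq> 0" "x + y \<noteq> 0" "((complex_of_real x)^2 - (complex_of_real y)^2) / 2 = 0"
  then have "complex_of_real ((x - y) * (x + y)) = 0" by (simp add: algebra_simps power2_eq_square)
  then have "(x - y) * (x + y) = 0" by (simp only: of_real_eq_0_iff)
  then show False using h by simp
qed

lemma rho_nz1:
  assumes k: "k1 \<ge> 0" "k2 \<ge> 0" "k3 \<ge> 0"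
  shows "rhoP n (pa k1 k2 k3 n) (- pb k1 k2 k3 n) (pc k1 k2 k3 n) t \<noteq> 0"
proof (cases "odd t")
  case True
  have "(of_nat t + 1 :: complex) = of_nat (Suc t)" by simp
  then have h: "(of_nat t + 1 :: complex) \<noteq> 0" by (simp only: of_nat_eq_0_iff)
  have r: "rhoP n (pa k1 k2 k3 n) (- pb k1 k2 k3 n) (pc k1 k2 k3 n) t = - (of_nat t + 1)"
    "rhoP n (pa k1 k2 k3 n) (- (- pb k1 k2 k3 n)) (pc k1 k2 k3 n) t = - (of_nat t + 1)"
    using True by (simp_all add: rhoP_def)
  show ?thesis unfolding r using h by (metis neg_equal_0_iff_equal)
next
  case False
  have e1: "pa k1 k2 k3 n + - pb k1 k2 k3 n - (of_nat n - 1) / 2 + of_nat t = complex_of_real (k1 + k2 + 2 * k3 + (real n + 3) / 2 + real t)"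
    by (simp add: pa_def pb_def field_simps)
  have e2: "pc k1 k2 k3 n = complex_of_real (k1 + k2 + (real n + 1) / 2)" by (simp add: pc_def)
  have t0: "0 \<le> real t" "0 \<le> real n" by simp_all
  have h1: "k1 + k2 + 2 * k3 + (real n + 3) / 2 + real t - (k1 + k2 + (real n + 1) / 2) \<noteq> 0" using k t0 by argo
  have h2: "k1 + k2 + 2 * k3 + (real n + 3) / 2 + real t + (k1 + k2 + (real n + 1) / 2) \<noteq> 0" using k t0 by argo
  show ?thesis unfolding rhoP_def e1 e2 if_not_P[OF False] by (rule sq_diff_nz[OF h1 h2])
qed

lemma rho_nz2:
  assumes k: "k1 \<ge> 0" "k2 \<ge> 0" "k3 \<ge> 0" and t: "t < n"
  shows "rhoP n (pa k1 k2 k3 n) (- (- pb k1 k2 k3 n)) (pc k1 k2 k3 n) t \<noteq> 0"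
proof (cases "odd t")
  case True
  have "(of_nat t + 1 :: complex) = of_nat (Suc t)" by simp
  then have h: "(of_nat t + 1 :: complex) \<noteq> 0" by (simp only: of_nat_eq_0_iff)
  have r: "rhoP n (pa k1 k2 k3 n) (- pb k1 k2 k3 n) (pc k1 k2 k3 n) t = - (of_nat t + 1)"
    "rhoP n (pa k1 k2 k3 n) (- (- pb k1 k2 k3 n)) (pc k1 k2 k3 n) t = - (of_nat t + 1)"
    using True by (simp_all add: rhoP_def)
  show ?thesis unfolding r using h by (metis neg_equal_0_iff_equal)
next
  case False
  have e1: "pa k1 k2 k3 n + - (- pb k1 k2 k3 n) - (of_nat n - 1) / 2 + of_nat t = complex_of_real (k2 - k1 - (real n - 1) / 2 + real t)"
    by (simp add: pa_def pb_def field_simps)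
  have e2: "pc k1 k2 k3 n = complex_of_real (k1 + k2 + (real n + 1) / 2)" by (simp add: pc_def)
  have tn: "real t \<le> real n - 1" using t by linarith
  have t0: "0 \<le> real t" "0 \<le> real n" by simp_all
  have h1: "k2 - k1 - (real n - 1) / 2 + real t - (k1 + k2 + (real n + 1) / 2) \<noteq> 0" using k t0 tn by argo
  have h2: "k2 - k1 - (real n - 1) / 2 + real t + (k1 + k2 + (real n + 1) / 2) \<noteq> 0" using k t0 tn by argo
  show ?thesis unfolding rhoP_def e1 e2 if_not_P[OF False] by (rule sq_diff_nz[OF h1 h2])
qed

lemma Nn_diag: "Nn \<beta> j j = 1"
  unfolding Nn_def by simp


lemma Eth_real: "Eth n (complex_of_real x) r = complex_of_real ((-1)^r * (2 * x - real n + 2 * real r) / 2)"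
  unfolding Eth_def by simp

lemma pb_real: "pb k1 k2 k3 n = complex_of_real (- k1 - k3 - (real n + 1) / 2)" by (simp add: pb_def)
lemma mpb_real: "- pb k1 k2 k3 n = complex_of_real (k1 + k3 + (real n + 1) / 2)" by (simp add: pb_def)

lemma abs_m1: "\<bar>(-1::real)^r * x\<bar> = \<bar>x\<bar>" by (simp add: abs_mult power_abs)

lemma dist_pb:
  assumes k: "k1 \<ge> 0" "k3 \<ge> 0"
  shows "\<forall>i\<le>n. \<forall>j\<le>n. i \<noteq> j \<longrightarrow> Eth n (pb k1 k2 k3 n) i \<noteq> Eth n (pb k1 k2 k3 n) j"
proof (intro allI impI)
  fix i j assume i: "i \<le> n" and j: "j \<le> n" and ij: "i \<noteq> j"
  show "Eth n (pb k1 k2 k3 n) i \<noteq> Eth n (pb k1 k2 k3 n) j"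
  proof
    assume "Eth n (pb k1 k2 k3 n) i = Eth n (pb k1 k2 k3 n) j"
    then have "(-1)^i * (2 * (- k1 - k3 - (real n + 1) / 2) - real n + 2 * real i) / 2
             = (-1)^j * (2 * (- k1 - k3 - (real n + 1) / 2) - real n + 2 * real j) / (2::real)"
      unfolding pb_real Eth_real by (simp only: of_real_eq_iff)
    then have "\<bar>(-1)^i * (2 * (- k1 - k3 - (real n + 1) / 2) - real n + 2 * real i)\<bar>
             = \<bar>(-1)^j * (2 * (- k1 - k3 - (real n + 1) / 2) - real n + 2 * real j)\<bar>" by simp
    then have "\<bar>2 * (- k1 - k3 - (real n + 1) / 2) - real n + 2 * real i\<bar>
             = \<bar>2 * (- k1 - k3 - (real n + 1) / 2) - real n + 2 * real j\<bar>" by (simp only: abs_m1)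
    moreover have ri: "real i \<le> real n" "real j \<le> real n" using i j by simp_all
    moreover have ni: "2 * (- k1 - k3 - (real n + 1) / 2) - real n + 2 * real i < 0" using ri k by argo
    moreover have nj: "2 * (- k1 - k3 - (real n + 1) / 2) - real n + 2 * real j < 0" using ri k by argo
    ultimately have "real i = real j" by (smt (verit))
    then show False using ij by simp
  qed
qed

lemma dist_mpb:
  assumes k: "k1 \<ge> 0" "k3 \<ge> 0"
  shows "\<forall>r. 0 < r \<longrightarrow> r \<le> n \<longrightarrow> Eth n (- pb k1 k2 k3 n) r \<noteq> Eth n (- pb k1 k2 k3 n) 0"
proof (intro allI impI)
  fix r :: nat assume r: "0 < r"
  show "Eth n (- pb k1 k2 k3 n) r \<noteq> Eth n (- pb k1 k2 k3 n) 0"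
  proof
    assume "Eth n (- pb k1 k2 k3 n) r = Eth n (- pb k1 k2 k3 n) 0"
    then have "(-1)^r * (2 * (k1 + k3 + (real n + 1) / 2) - real n + 2 * real r) / 2
             = (-1)^0 * (2 * (k1 + k3 + (real n + 1) / 2) - real n + 2 * real 0) / (2::real)"
      unfolding mpb_real Eth_real by (simp only: of_real_eq_iff)
    then have "\<bar>(-1)^r * (2 * (k1 + k3 + (real n + 1) / 2) - real n + 2 * real r)\<bar>
             = \<bar>(2 * (k1 + k3 + (real n + 1) / 2) - real n + 2 * real 0)\<bar>" by simp
    then have "\<bar>2 * (k1 + k3 + (real n + 1) / 2) - real n + 2 * real r\<bar>
             = \<bar>(2 * (k1 + k3 + (real n + 1) / 2) - real n + 2 * real 0)\<bar>" by (simp only: abs_m1)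
    moreover have r0: "0 \<le> real r" by simp
    moreover have pr: "0 < 2 * (k1 + k3 + (real n + 1) / 2) - real n + 2 * real r" using k r0 by argo
    moreover have p0: "0 < 2 * (k1 + k3 + (real n + 1) / 2) - real n + 2 * real (0::nat)" using k by (simp add: field_simps)
    ultimately have "real r = 0" by (simp add: field_simps)
    then show False using r by simp
  qed
qed

lemma eq_pb: "odd n \<Longrightarrow> Eth n (pb k1 k2 k3 n) n = Eth n (- pb k1 k2 k3 n) 0"
  unfolding Eth_def pb_def by (simp add: field_simps)

lemma matact_add: "matact d M (\<lambda>x. u x + v x) = (\<lambda>y. matact d M u y + matact d M v y)"
  unfolding matact_def by (intro ext) (simp add: sum.distrib algebra_simps)
lemma matact_smul: "matact d M (\<lambda>x. k * u x) = (\<lambda>y. k * matact d M u y)"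
  unfolding matact_def by (intro ext) (simp add: sum_distrib_left algebra_simps)

theorem partB:
  assumes n: "odd n" and k: "k1 \<ge> 0" "k2 \<ge> 0" "k3 \<ge> 0"
  shows "bi_irreducible (Ecar n) (Eact n (pa k1 k2 k3 n) (pb k1 k2 k3 n) (pc k1 k2 k3 n))
    \<and> bi_iso (Ecar n) (Eact n (pa k1 k2 k3 n) (pb k1 k2 k3 n) (pc k1 k2 k3 n))
             (Ecar n) (Eact n (pa k1 k2 k3 n) (- pb k1 k2 k3 n) (pc k1 k2 k3 n))"
proof -
  let ?a = "pa k1 k2 k3 n" and ?b = "pb k1 k2 k3 n" and ?c = "pc k1 k2 k3 n"
  let ?P = "Psi n ?a (- ?b) ?c"
  let ?F = "matact n ?P"
  have diag: "\<forall>r\<le>n. ?P r r \<noteq> 0"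
  proof (intro allI impI)
    fix r assume r: "r \<le> n"
    have A: "Amat n ?a (- ?b) ?c r \<noteq> 0" unfolding Amat_def
      using rho_nz1[OF k, of n] by (simp add: prod_zero_iff)
    have B: "Bmat n ?a (- ?b) ?c r \<noteq> 0" unfolding Bmat_def
      using rho_nz2[OF k] r by (auto simp: prod_zero_iff)
    show "?P r r \<noteq> 0" using A B by (simp add: Psi_def Nn_diag)
  qed
  have low: "\<forall>r j. r < j \<longrightarrow> ?P r j = 0" using Psi_big by blast
  have bij: "bij_betw ?F (Ecar n) (Ecar n)" by (rule tri_bij[OF diag low])
  have hX: "\<And>u. ?F (matact n (EXm n ?a) u) = matact n (EXm n ?a) (?F u)" by (rule PhiX)
  have hY: "\<And>u. ?F (matact n (EYm n ?a ?b ?c) u) = matact n (EYm n ?a (- ?b) ?c) (?F u)"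
    using PhiY[OF n, of ?a "- ?b" ?c] by simp
  have hZ: "\<And>u. ?F (Eact n ?a ?b ?c GZ u) = Eact n ?a (- ?b) ?c GZ (?F u)"
    using PhiZ[OF n, of ?a "- ?b" ?c] by simp
  have irr: "bi_irreducible (Ecar n) (Eact n ?a ?b ?c)"
  proof (rule irred_generic[OF n dist_pb[OF k(1,3)] dist_mpb[OF k(1,3)] eq_pb[OF n]])
    show "inj_on ?F (Ecar n)" using bij by (simp add: bij_betw_def)
  qed (simp_all add: matact_Ecar matact_add matact_smul hX hY)
  have iso: "bi_iso (Ecar n) (Eact n ?a ?b ?c) (Ecar n) (Eact n ?a (- ?b) ?c)"
    unfolding bi_iso_def
  proof (intro exI[of _ ?F] conjI ballI allI)
    show "bij_betw ?F (Ecar n) (Ecar n)" by (rule bij)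
  next
    fix g u
    show "?F (Eact n ?a ?b ?c g u) = Eact n ?a (- ?b) ?c g (?F u)"
      by (cases g) (simp_all add: Eact_def hX hY hZ[unfolded Eact_def, simplified])
  qed (simp_all add: matact_add matact_smul)
  show ?thesis using irr iso by simp
qed

theorem theorem6p3:
  fixes k1 k2 k3 :: real and n :: nat
  assumes "odd n" and "1 \<le> n"
    and "ereal (real n) < min (tval k1) (min (tval k2) (tval k3))"
  shows "bi_iso (Mspace k1 k2 k3 n) (Mact k1 k2 k3)
           (dsum_car (Ecar n) (Ecar n))
           (dsum_act (Eact n (complex_of_real (k2 + k3 + (real n + 1) / 2))
                             (complex_of_real (- k1 - k3 - (real n + 1) / 2))
                             (complex_of_real (k1 + k2 + (real n + 1) / 2)))
                     (Eact n (complex_of_real (k2 + k3 + (real n + 1) / 2))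
                             (complex_of_real (- k1 - k3 - (real n + 1) / 2))
                             (complex_of_real (k1 + k2 + (real n + 1) / 2))))
       \<and> (k1 \<ge> 0 \<and> k2 \<ge> 0 \<and> k3 \<ge> 0 \<longrightarrow>
            bi_irreducible (Ecar n)
              (Eact n (complex_of_real (k2 + k3 + (real n + 1) / 2))
                      (complex_of_real (- k1 - k3 - (real n + 1) / 2))
                      (complex_of_real (k1 + k2 + (real n + 1) / 2)))
          \<and> bi_iso (Ecar n)
              (Eact n (complex_of_real (k2 + k3 + (real n + 1) / 2))
                      (complex_of_real (- k1 - k3 - (real n + 1) / 2))
                      (complex_of_real (k1 + k2 + (real n + 1) / 2)))
              (Ecar n)
              (Eact n (complex_of_real (k2 + k3 + (real n + 1) / 2))
                      (complex_of_real (k1 + k3 + (real n + 1) / 2))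
                      (complex_of_real (k1 + k2 + (real n + 1) / 2))))"
proof -
  have A: "bi_iso (Mspace k1 k2 k3 n) (Mact k1 k2 k3) (dsum_car (Ecar n) (Ecar n))
    (dsum_act (Eact n (pa k1 k2 k3 n) (pb k1 k2 k3 n) (pc k1 k2 k3 n)) (Eact n (pa k1 k2 k3 n) (pb k1 k2 k3 n) (pc k1 k2 k3 n)))"
    by (rule partA[OF assms])
  have B: "k1 \<ge> 0 \<and> k2 \<ge> 0 \<and> k3 \<ge> 0 \<longrightarrow>
      bi_irreducible (Ecar n) (Eact n (pa k1 k2 k3 n) (pb k1 k2 k3 n) (pc k1 k2 k3 n))
    \<and> bi_iso (Ecar n) (Eact n (pa k1 k2 k3 n) (pb k1 k2 k3 n) (pc k1 k2 k3 n))
             (Ecar n) (Eact n (pa k1 k2 k3 n) (- pb k1 k2 k3 n) (pc k1 k2 k3 n))"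
    using partB[OF assms(1)] by blast
  show ?thesis using A B unfolding mpb_real unfolding pa_def pb_def pc_def by simp
qed

end
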